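(* Let $\Omega,\mathcal{L},\mathbb{G}$ be as in the context, assume (A1), (A2) and that $\mathbb{G}$ satisfies (K2) with exponent $\gamma\in(0,1]$. For $n\ge1$ let $\Phi_n$ be the $n$-th eigenfunction of $\mathcal{L}^{-1}$ with $\|\Phi_n\|_{L^2(\Omega)}=1$. Then there is a constant $\overline{\kappa}_n>0$ depending only on $N,s,n,\Omega$ such that $|\Phi_n(x)|\le\overline{\kappa}_n\,\mathrm{dist}(x,\partial\Omega)^\gamma$ for all $x\in\overline{\Omega}$.
   Context: Let $N\ge2$, $\Omega\subset\mathbb{R}^N$ a bounded domain with $C^{1,1}$ boundary. $\mathcal{L}:\mathrm{dom}(\mathcal{L})\subseteq L^1(\Omega)\to L^1(\Omega)$ is densely defined, linear (Dirichlet conditions built in), with (A1) $\mathcal{L}$ is $m$-accretive on $L^1(\Omega)$ and (A2) if $0\le g\le1$ then $0\le e^{-t\mathcal{L}}g\le1$ for all $t>0$. It has a left inverse $\mathcal{L}^{-1}[g](x)=\int_\Omega\mathbb{G}(x,y)g(y)dy$ on $L^1(\Omega)$, self-adjoint on $L^2(\Omega)$. With $\delta_\gamma(x):=\mathrm{dist}(x,\partial\Omega)^\gamma$, (K2) means: there are $s\in(0,1]$, $\gamma\in(0,1]$, $c_0,c_1>0$ with, for a.e. $x,y\in\Omega$, $c_0\delta_\gamma(x)\delta_\gamma(y)\le\mathbb{G}(x,y)\le\frac{c_1}{|x-y|^{N-2s}}\Big(\frac{\delta_\gamma(x)}{|x-y|^\gamma}\wedge1\Big)\Big(\frac{\delta_\gamma(y)}{|x-y|^\gamma}\wedge1\Big)$.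 Under these assumptions $\mathcal{L}^{-1}$ is a compact self-adjoint operator on $L^2(\Omega)$ with discrete spectrum; eigenfunctions are ordered by decreasing eigenvalue of $\mathcal{L}^{-1}$. *)

theory Defs
  imports "HOL-Analysis.Analysis"
begin

definition bounded_domain :: "('a::euclidean_space) set \<Rightarrow> bool" where
  "bounded_domain \<Omega> \<longleftrightarrow> open \<Omega> \<and> connected \<Omega> \<and> bounded \<Omega> \<and> \<Omega> \<noteq> {}"

text \<open>C^{1,1} boundary: near every boundary point, after choosing a unit direction e,
  the domain is the strict epigraph (in direction e) of a C^1 function with Lipschitz
  derivative, defined on the hyperplane orthogonal to e (the function is given on the whole
  space and only evaluated on that hyperplane).\<close>
definition C11_boundary :: "('a::euclidean_space) set \<Rightarrow> bool" where
  "C11_boundary \<Omega> \<longleftrightarrow>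
     (\<forall>p\<in>frontier \<Omega>. \<exists>r>0. \<exists>e::'a. \<exists>h::'a \<Rightarrow> real. \<exists>Dh::'a \<Rightarrow> 'a \<Rightarrow> real. \<exists>Lc.
        norm e = 1 \<and>
        (\<forall>x. (h has_derivative Dh x) (at x)) \<and>
        (\<forall>x y. onorm (\<lambda>v. Dh x v - Dh y v) \<le> Lc * norm (x - y)) \<and>
        (\<forall>x\<in>ball p r. x \<in> \<Omega> \<longleftrightarrow> h (x - (x \<bullet> e) *\<^sub>R e) < x \<bullet> e))"

definition aeq :: "('a::euclidean_space) set \<Rightarrow> ('a \<Rightarrow> real) \<Rightarrow> ('a \<Rightarrow> real) \<Rightarrow> bool" where
  "aeq \<Omega> f g \<longleftrightarrow> (AE x in lebesgue_on \<Omega>. f x = g x)"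

definition L1norm :: "('a::euclidean_space) set \<Rightarrow> ('a \<Rightarrow> real) \<Rightarrow> real" where
  "L1norm \<Omega> f = (\<integral>x. \<bar>f x\<bar> \<partial>lebesgue_on \<Omega>)"

definition L2fun :: "('a::euclidean_space) set \<Rightarrow> ('a \<Rightarrow> real) \<Rightarrow> bool" where
  "L2fun \<Omega> f \<longleftrightarrow> f \<in> borel_measurable (lebesgue_on \<Omega>) \<and>
                   integrable (lebesgue_on \<Omega>) (\<lambda>x. (f x)\<^sup>2)"

definition linear_L1_operator ::
  "('a::euclidean_space) set \<Rightarrow> ('a \<Rightarrow> real) set \<Rightarrow> (('a \<Rightarrow> real) \<Rightarrow> ('a \<Rightarrow> real)) \<Rightarrow> bool" where
  "linear_L1_operator \<Omega> D L \<longleftrightarrow>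
     (\<forall>u\<in>D. integrable (lebesgue_on \<Omega>) u \<and> integrable (lebesgue_on \<Omega>) (L u)) \<and>
     (\<forall>u v. u \<in> D \<longrightarrow> integrable (lebesgue_on \<Omega>) v \<longrightarrow> aeq \<Omega> u v \<longrightarrow>
            v \<in> D \<and> aeq \<Omega> (L u) (L v)) \<and>
     (\<forall>u\<in>D. \<forall>v\<in>D. \<forall>a b::real. (\<lambda>x. a * u x + b * v x) \<in> D \<and>
            aeq \<Omega> (L (\<lambda>x. a * u x + b * v x)) (\<lambda>x. a * L u x + b * L v x))"

definition densely_defined :: "('a::euclidean_space) set \<Rightarrow> ('a \<Rightarrow> real) set \<Rightarrow> bool" where
  "densely_defined \<Omega> D \<longleftrightarrow>
     (\<forall>g. integrable (lebesgue_on \<Omega>) g \<longrightarrow>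
        (\<forall>\<epsilon>>0. \<exists>u\<in>D. L1norm \<Omega> (\<lambda>x. u x - g x) < \<epsilon>))"

definition m_accretive_L1 ::
  "('a::euclidean_space) set \<Rightarrow> ('a \<Rightarrow> real) set \<Rightarrow> (('a \<Rightarrow> real) \<Rightarrow> ('a \<Rightarrow> real)) \<Rightarrow> bool" where
  "m_accretive_L1 \<Omega> D L \<longleftrightarrow>
     (\<forall>u\<in>D. \<forall>lam>0. L1norm \<Omega> u \<le> L1norm \<Omega> (\<lambda>x. u x + lam * L u x)) \<and>
     (\<forall>lam>0. \<forall>g. integrable (lebesgue_on \<Omega>) g \<longrightarrow>
        (\<exists>u\<in>D. aeq \<Omega> (\<lambda>x. u x + lam * L u x) g))"

text \<open>Iterated resolvent: resolvent_iter \<Omega> D L lam k g u means u = (I + lam L)^{-k} g (a.e.).\<close>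
inductive resolvent_iter ::
  "('a::euclidean_space) set \<Rightarrow> ('a \<Rightarrow> real) set \<Rightarrow> (('a \<Rightarrow> real) \<Rightarrow> ('a \<Rightarrow> real)) \<Rightarrow> real \<Rightarrow>
   nat \<Rightarrow> ('a \<Rightarrow> real) \<Rightarrow> ('a \<Rightarrow> real) \<Rightarrow> bool"
  for \<Omega> D L lam where
  base: "integrable (lebesgue_on \<Omega>) g \<Longrightarrow> integrable (lebesgue_on \<Omega>) u \<Longrightarrow> aeq \<Omega> u g \<Longrightarrow>
         resolvent_iter \<Omega> D L lam 0 g u"
| step: "resolvent_iter \<Omega> D L lam k g w \<Longrightarrow> u \<in> D \<Longrightarrow> aeq \<Omega> (\<lambda>x. u x + lam * L u x) w \<Longrightarrow>
         resolvent_iter \<Omega> D L lam (Suc k) g u"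

text \<open>v = e^{-tL} g, via the exponential (Crandall--Liggett) formula
  e^{-tL} g = lim_{k\<to>\<infinity>} (I + (t/k) L)^{-k} g in L^1(\<Omega>).\<close>
definition semigroup_value ::
  "('a::euclidean_space) set \<Rightarrow> ('a \<Rightarrow> real) set \<Rightarrow> (('a \<Rightarrow> real) \<Rightarrow> ('a \<Rightarrow> real)) \<Rightarrow> real \<Rightarrow>
   ('a \<Rightarrow> real) \<Rightarrow> ('a \<Rightarrow> real) \<Rightarrow> bool" where
  "semigroup_value \<Omega> D L t g v \<longleftrightarrow>
     integrable (lebesgue_on \<Omega>) v \<and>
     (\<exists>U. (\<forall>k\<ge>1. resolvent_iter \<Omega> D L (t / real k) k g (U k)) \<and>
          (\<lambda>k. L1norm \<Omega> (\<lambda>x. U k x - v x)) \<longlonglongrightarrow> 0)"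

definition sub_Markov ::
  "('a::euclidean_space) set \<Rightarrow> ('a \<Rightarrow> real) set \<Rightarrow> (('a \<Rightarrow> real) \<Rightarrow> ('a \<Rightarrow> real)) \<Rightarrow> bool" where
  "sub_Markov \<Omega> D L \<longleftrightarrow>
     (\<forall>t>0. \<forall>g v. integrable (lebesgue_on \<Omega>) g \<longrightarrow>
        (AE x in lebesgue_on \<Omega>. 0 \<le> g x \<and> g x \<le> 1) \<longrightarrow>
        semigroup_value \<Omega> D L t g v \<longrightarrow>
        (AE x in lebesgue_on \<Omega>. 0 \<le> v x \<and> v x \<le> 1))"

definition Ginv :: "('a::euclidean_space) set \<Rightarrow> ('a \<Rightarrow> 'a \<Rightarrow> real) \<Rightarrow> ('a \<Rightarrow> real) \<Rightarrow> 'a \<Rightarrow> real" where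
  "Ginv \<Omega> G f = (\<lambda>x. \<integral>y. G x y * f y \<partial>lebesgue_on \<Omega>)"

definition green_left_inverse ::
  "('a::euclidean_space) set \<Rightarrow> ('a \<Rightarrow> real) set \<Rightarrow> (('a \<Rightarrow> real) \<Rightarrow> ('a \<Rightarrow> real)) \<Rightarrow>
   ('a \<Rightarrow> 'a \<Rightarrow> real) \<Rightarrow> bool" where
  "green_left_inverse \<Omega> D L G \<longleftrightarrow>
     (\<lambda>z. G (fst z) (snd z)) \<in> borel_measurable (lebesgue_on \<Omega> \<Otimes>\<^sub>M lebesgue_on \<Omega>) \<and>
     (\<forall>g. integrable (lebesgue_on \<Omega>) g \<longrightarrow> integrable (lebesgue_on \<Omega>) (Ginv \<Omega> G g)) \<and>
     (\<forall>u\<in>D. aeq \<Omega> (Ginv \<Omega> G (L u)) u) \<and>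
     (\<forall>f g. L2fun \<Omega> f \<longrightarrow> L2fun \<Omega> g \<longrightarrow>
        L2fun \<Omega> (Ginv \<Omega> G f) \<and>
        (\<integral>x. Ginv \<Omega> G f x * g x \<partial>lebesgue_on \<Omega>) = (\<integral>x. f x * Ginv \<Omega> G g x \<partial>lebesgue_on \<Omega>))"

definition delta_pow :: "('a::euclidean_space) set \<Rightarrow> real \<Rightarrow> 'a \<Rightarrow> real" where
  "delta_pow \<Omega> \<gamma> x = infdist x (frontier \<Omega>) powr \<gamma>"

text \<open>(K2), with N = DIM('a).\<close>
definition K2 :: "('a::euclidean_space) set \<Rightarrow> ('a \<Rightarrow> 'a \<Rightarrow> real) \<Rightarrow> real \<Rightarrow> real \<Rightarrow> real \<Rightarrow> real \<Rightarrow> bool" where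
  "K2 \<Omega> G s \<gamma> c0 c1 \<longleftrightarrow>
     0 < s \<and> s \<le> 1 \<and> 0 < \<gamma> \<and> \<gamma> \<le> 1 \<and> 0 < c0 \<and> 0 < c1 \<and>
     (AE z in lebesgue_on \<Omega> \<Otimes>\<^sub>M lebesgue_on \<Omega>.
        c0 * delta_pow \<Omega> \<gamma> (fst z) * delta_pow \<Omega> \<gamma> (snd z) \<le> G (fst z) (snd z) \<and>
        G (fst z) (snd z) \<le>
          c1 / norm (fst z - snd z) powr (real DIM('a) - 2 * s)
          * min (delta_pow \<Omega> \<gamma> (fst z) / norm (fst z - snd z) powr \<gamma>) 1
          * min (delta_pow \<Omega> \<gamma> (snd z) / norm (fst z - snd z) powr \<gamma>) 1)"

text \<open>Thus \<Phi> n is an "n-th eigenfunction" (counting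
  multiplicity) normalised in L^2.\<close>
definition ordered_eigensystem ::
  "('a::euclidean_space) set \<Rightarrow> ('a \<Rightarrow> 'a \<Rightarrow> real) \<Rightarrow> (nat \<Rightarrow> 'a \<Rightarrow> real) \<Rightarrow> (nat \<Rightarrow> real) \<Rightarrow> bool" where
  "ordered_eigensystem \<Omega> G \<Phi> \<mu> \<longleftrightarrow>
     (\<forall>k\<ge>1. L2fun \<Omega> (\<Phi> k) \<and> \<mu> k \<noteq> 0 \<and> aeq \<Omega> (Ginv \<Omega> G (\<Phi> k)) (\<lambda>x. \<mu> k * \<Phi> k x)) \<and>
     (\<forall>j\<ge>1. \<forall>k\<ge>1. (\<integral>x. \<Phi> j x * \<Phi> k x \<partial>lebesgue_on \<Omega>) = (if j = k then 1 else 0)) \<and>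
     (\<forall>j\<ge>1. \<forall>k\<ge>j. \<mu> k \<le> \<mu> j) \<and>
     (\<forall>f m. L2fun \<Omega> f \<longrightarrow> m \<noteq> 0 \<longrightarrow> aeq \<Omega> (Ginv \<Omega> G f) (\<lambda>x. m * f x) \<longrightarrow>
        (\<forall>k\<ge>1. (\<integral>x. f x * \<Phi> k x \<partial>lebesgue_on \<Omega>) = 0) \<longrightarrow> aeq \<Omega> f (\<lambda>x. 0))"

end

theory Submission
  imports Defs
begin

lemma nn_integral_shells:
  fixes g :: "'a::euclidean_space \<Rightarrow> ennreal"
  assumes S: "\<And>k. S k \<in> sets lborel"
    and g: "\<And>z. g z \<le> (\<Sum>k. c k * indicator (S k) z)"
  shows "integral\<^sup>N lborel g \<le> (\<Sum>k. c k * emeasure lborel (S k))"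
proof -
  have "integral\<^sup>N lborel g \<le> (\<integral>\<^sup>+z. (\<Sum>k. c k * indicator (S k) z) \<partial>lborel)"
    by (rule nn_integral_mono) (rule g)
  also have "\<dots> = (\<Sum>k. \<integral>\<^sup>+z. c k * indicator (S k) z \<partial>lborel)"
    by (rule nn_integral_suminf) (use S in auto)
  also have "\<dots> = (\<Sum>k. c k * emeasure lborel (S k))"
    by (intro suminf_cong nn_integral_cmult_indicator S)
  finally show ?thesis .
qed

lemma ennreal_le_suminf_single:
  fixes f :: "nat \<Rightarrow> ennreal"
  shows "f j \<le> (\<Sum>k. f k)"
  using sum_le_suminf[OF summableI, of "{j}" f] by simp

lemma emeasure_lborel_ball_eq:
  fixes c :: "'a::euclidean_space"
  assumes "r \<ge> 0"
  shows "emeasure lborel (ball c r) = ennreal (r ^ DIM('a) * measure lborel (ball (0::'a) 1))"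
proof -
  have "emeasure lborel (ball c r) = emeasure lebesgue (ball c r)"
    by (simp add: emeasure_completion)
  also have "\<dots> = ennreal (r ^ DIM('a)) * emeasure lebesgue (ball (0 :: 'a) 1)"
    by (rule emeasure_lebesgue_ball_conv_unit_ball) fact
  also have "emeasure lebesgue (ball (0 :: 'a) 1) = emeasure lborel (ball (0 :: 'a) 1)"
    by (simp add: emeasure_completion)
  also have "\<dots> = ennreal (measure lborel (ball (0::'a) 1))"
    by (rule emeasure_eq_ennreal_measure) (use emeasure_lborel_ball_finite[of "0::'a" 1] in \<open>simp add: less_top\<close>)
  finally show ?thesis using assms by (simp add: ennreal_mult)
qed

lemma geom_ennreal:
  assumes "0 \<le> A" "0 \<le> q" "q < 1"
  shows "(\<Sum>k. ennreal (A * q ^ k)) = ennreal (A / (1 - q))"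
proof (rule suminf_ennreal_eq)
  show "0 \<le> A * q ^ k" for k using assms by simp
  have "(\<lambda>k. q ^ k) sums (1 / (1 - q))" using geometric_sums[of q] assms by simp
  from sums_mult[OF this, of A] show "(\<lambda>k. A * q ^ k) sums (A / (1 - q))" by simp
qed

lemma powr_calc:
  fixes \<rho> b n V :: real and k d :: nat
  assumes \<rho>: "\<rho> > 0" and n: "n = real d"
  shows "(\<rho> / 2 ^ Suc k) powr (-b) * ((\<rho> / 2 ^ k) ^ d * V) = V * 2 powr b * \<rho> powr (n - b) * (2 powr (b - n)) ^ k"
proof -
  define t where "t = \<rho> / 2 ^ k"
  have t: "t > 0" using \<rho> by (simp add: t_def)
  have a1: "\<rho> / 2 ^ Suc k = t / 2" by (simp add: t_def)
  have a2: "(t / 2) powr (-b) = t powr (-b) * 2 powr b"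
  proof -
    have "(t/2) powr (-b) = t powr (-b) / 2 powr (-b)" by (rule powr_divide)
    also have "(2::real) powr (-b) = inverse (2 powr b)" by (rule powr_minus)
    finally show ?thesis by (simp only: divide_inverse inverse_inverse_eq)
  qed
  have a3: "t ^ d = t powr n" using t n by (simp add: powr_realpow)
  have a4: "t powr (-b) * t powr n = t powr (n - b)" by (simp add: powr_add[symmetric])
  have a5: "t powr (n - b) = \<rho> powr (n - b) * (2 powr (b - n)) ^ k"
  proof -
    have "t powr (n - b) = \<rho> powr (n - b) / (2 ^ k) powr (n - b)"
      unfolding t_def by (rule powr_divide)
    also have "(2::real) ^ k = 2 powr (real k)" by (simp add: powr_realpow)
    also have "(2 powr (real k)) powr (n - b) = (2 powr (b - n)) powr (- real k)"
      by (simp add: powr_powr algebra_simps)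
    also have "(2 powr (b - n)) powr (- real k) = inverse ((2 powr (b - n)) ^ k)"
      by (simp add: powr_minus powr_realpow)
    finally show ?thesis by (simp only: divide_inverse inverse_inverse_eq)
  qed
  show ?thesis unfolding a1 a2 a3 t_def[symmetric]
    using a4 a5 by (simp add: algebra_simps)
qed
lemma powr_calc2:
  fixes \<rho> c n V :: real and k d :: nat
  assumes \<rho>: "\<rho> > 0" and n: "n = real d"
  shows "(\<rho> * 2 ^ k) powr (-c) * ((\<rho> * 2 ^ Suc k) ^ d * V) = V * 2 ^ d * \<rho> powr (n - c) * (2 powr (n - c)) ^ k"
proof -
  define t where "t = \<rho> * 2 ^ k"
  have t: "t > 0" using \<rho> by (simp add: t_def)
  have a1: "\<rho> * 2 ^ Suc k = 2 * t" by (simp add: t_def)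
  have a3: "(2 * t) ^ d = 2 ^ d * t powr n" using t n by (simp add: powr_realpow power_mult_distrib)
  have a4: "t powr (-c) * t powr n = t powr (n - c)" by (simp add: powr_add[symmetric])
  have a5: "t powr (n - c) = \<rho> powr (n - c) * (2 powr (n - c)) ^ k"
  proof -
    have "t powr (n - c) = \<rho> powr (n - c) * (2 ^ k) powr (n - c)"
      unfolding t_def using \<rho> by (intro powr_mult; simp)
    also have "(2::real) ^ k = 2 powr (real k)" by (simp add: powr_realpow)
    also have "(2 powr (real k)) powr (n - c) = (2 powr (n - c)) powr (real k)"
      by (simp add: powr_powr algebra_simps)
    also have "(2 powr (n - c)) powr (real k) = (2 powr (n - c)) ^ k"
      by (simp add: powr_realpow)
    finally show ?thesis .
  qed
  show ?thesis unfolding a1 a3 t_def[symmetric]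
    using a4 a5 by (simp add: algebra_simps)
qed
lemma radial_inner:
  fixes y :: "'a::euclidean_space"
  assumes b: "0 \<le> b" "b < real DIM('a)"
  shows "\<exists>C\<ge>0. \<forall>y::'a. \<forall>\<rho>>0.
     (\<integral>\<^sup>+z. indicator (ball y \<rho>) z * ennreal (norm (z - y) powr (-b)) \<partial>lborel)
       \<le> ennreal (C * \<rho> powr (real DIM('a) - b))"
proof -
  define n where "n = real DIM('a)"
  define V where "V = measure lborel (ball (0::'a) 1)"
  define q where "q = (2::real) powr (b - n)"
  have V0: "V \<ge> 0" unfolding V_def by simp
  have q0: "0 \<le> q" "q < 1" using b powr_less_mono[of "b - n" 0 2] unfolding q_def n_def by auto
  define C where "C = V * 2 powr b / (1 - q)"
  have C0: "C \<ge> 0" unfolding C_def using V0 q0 by simp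
  show ?thesis
  proof (intro exI[of _ C] conjI allI impI C0)
    fix y :: 'a and \<rho> :: real assume \<rho>: "\<rho> > 0"
    define S where "S k = {z. \<rho> / 2 ^ Suc k \<le> norm (z - y) \<and> norm (z - y) < \<rho> / 2 ^ k}" for k
    define c where "c k = ennreal ((\<rho> / 2 ^ Suc k) powr (-b))" for k
    have Smeas: "S k \<in> sets lborel" for k unfolding S_def by measurable
    have pt: "indicator (ball y \<rho>) z * ennreal (norm (z - y) powr (-b)) \<le> (\<Sum>k. c k * indicator (S k) z)" for z
    proof (cases "z \<in> ball y \<rho> \<and> z \<noteq> y")
      case False
      then show ?thesis by (auto simp: indicator_def)
    next
      case True
      define r where "r = norm (z - y)"
      have r: "0 < r" "r < \<rho>" using True by (auto simp: r_def dist_norm norm_minus_commute)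
      obtain m :: nat where m: "\<rho> / r < 2 ^ m" using real_arch_pow[of 2 "\<rho> / r"] by auto
      have Pm: "\<rho> / 2 ^ Suc m \<le> r"
      proof -
        have "\<rho> < r * 2 ^ m" using m r by (simp add: field_simps)
        hence "\<rho> / 2 ^ m < r" by (simp add: field_simps)
        moreover have "\<rho> / 2 ^ Suc m \<le> \<rho> / 2 ^ m" using \<rho> by (simp add: frac_le)
        ultimately show ?thesis by linarith
      qed
      define k where "k = (LEAST k. \<rho> / 2 ^ Suc k \<le> r)"
      have k1: "\<rho> / 2 ^ Suc k \<le> r" unfolding k_def by (rule LeastI[of _ m]) (rule Pm)
      have k2: "r < \<rho> / 2 ^ k"
      proof (cases k)
        case 0 then show ?thesis using r by simp
      next
        case (Suc j)
        have "\<not> \<rho> / 2 ^ Suc j \<le> r" using not_less_Least[of j "\<lambda>k. \<rho> / 2 ^ Suc k \<le> r"] Suc k_def by auto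
        then show ?thesis using Suc by simp
      qed
      have zS: "z \<in> S k" using k1 k2 unfolding S_def r_def by auto
      have "ennreal (r powr (-b)) \<le> c k"
        unfolding c_def using k1 b \<rho> by (intro ennreal_leI powr_mono2') auto
      also have "c k = c k * indicator (S k) z" using zS by simp
      also have "\<dots> \<le> (\<Sum>k. c k * indicator (S k) z)" by (rule ennreal_le_suminf_single)
      finally show ?thesis using True by (simp add: r_def)
    qed
    have "(\<integral>\<^sup>+z. indicator (ball y \<rho>) z * ennreal (norm (z - y) powr (-b)) \<partial>lborel)
        \<le> (\<Sum>k. c k * emeasure lborel (S k))"
      by (rule nn_integral_shells[OF Smeas pt])
    also have "\<dots> \<le> (\<Sum>k. ennreal (V * 2 powr b * \<rho> powr (n - b) * q ^ k))"
    proof (intro suminf_le allI)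
      fix k
      have "emeasure lborel (S k) \<le> emeasure lborel (ball y (\<rho> / 2 ^ k))"
        by (intro emeasure_mono) (auto simp: S_def dist_norm norm_minus_commute)
      also have "\<dots> = ennreal ((\<rho> / 2 ^ k) ^ DIM('a) * V)"
        unfolding V_def using \<rho> by (intro emeasure_lborel_ball_eq) simp
      finally have "c k * emeasure lborel (S k) \<le> c k * ennreal ((\<rho> / 2 ^ k) ^ DIM('a) * V)"
        by (rule mult_left_mono) simp
      also have "\<dots> = ennreal ((\<rho> / 2 ^ Suc k) powr (-b) * ((\<rho> / 2 ^ k) ^ DIM('a) * V))"
        unfolding c_def by (rule ennreal_mult[symmetric]) (use V0 \<rho> in auto)
      also have "(\<rho> / 2 ^ Suc k) powr (-b) * ((\<rho> / 2 ^ k) ^ DIM('a) * V) = V * 2 powr b * \<rho> powr (n - b) * q ^ k"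
        unfolding q_def by (rule powr_calc[OF \<rho>]) (simp add: n_def)
      finally show "c k * emeasure lborel (S k) \<le> ennreal (V * 2 powr b * \<rho> powr (n - b) * q ^ k)" .
    qed auto
    also have "\<dots> = ennreal (V * 2 powr b * \<rho> powr (n - b) / (1 - q))"
      using q0 V0 by (intro geom_ennreal) auto
    also have "\<dots> = ennreal (C * \<rho> powr (real DIM('a) - b))" unfolding C_def n_def by simp
    finally show "(\<integral>\<^sup>+z. indicator (ball y \<rho>) z * ennreal (norm (z - y) powr (-b)) \<partial>lborel)
       \<le> ennreal (C * \<rho> powr (real DIM('a) - b))" .
  qed
qed

lemma radial_outer:
  assumes c: "real DIM('a) < c"
  shows "\<exists>C\<ge>0. \<forall>y::'a::euclidean_space. \<forall>\<rho>>0.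
     (\<integral>\<^sup>+z. indicator {z. \<rho> \<le> norm (z - y)} z * ennreal (norm (z - y) powr (-c)) \<partial>lborel)
       \<le> ennreal (C * \<rho> powr (real DIM('a) - c))"
proof -
  define n where "n = real DIM('a)"
  define V where "V = measure lborel (ball (0::'a) 1)"
  define q where "q = (2::real) powr (n - c)"
  have V0: "V \<ge> 0" unfolding V_def by simp
  have q0: "0 \<le> q" "q < 1" using c powr_less_mono[of "n - c" 0 2] unfolding q_def n_def by auto
  define C where "C = V * 2 ^ DIM('a) / (1 - q)"
  have C0: "C \<ge> 0" unfolding C_def using V0 q0 by simp
  show ?thesis
  proof (intro exI[of _ C] conjI allI impI C0)
    fix y :: 'a and \<rho> :: real assume \<rho>: "\<rho> > 0"
    define S where "S k = {z. \<rho> * 2 ^ k \<le> norm (z - y) \<and> norm (z - y) < \<rho> * 2 ^ Suc k}" for k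
    define cc where "cc k = ennreal ((\<rho> * 2 ^ k) powr (-c))" for k
    have Smeas: "S k \<in> sets lborel" for k unfolding S_def by measurable
    have pt: "indicator {z. \<rho> \<le> norm (z - y)} z * ennreal (norm (z - y) powr (-c)) \<le> (\<Sum>k. cc k * indicator (S k) z)" for z
    proof (cases "\<rho> \<le> norm (z - y)")
      case False
      then show ?thesis by (auto simp: indicator_def)
    next
      case True
      define r where "r = norm (z - y)"
      have r: "\<rho> \<le> r" using True by (auto simp: r_def)
      obtain m :: nat where m: "r / \<rho> < 2 ^ m" using real_arch_pow[of 2 "r / \<rho>"] by auto
      have Pm: "r < \<rho> * 2 ^ Suc m"
      proof -
        have "r < \<rho> * 2 ^ m" using m \<rho> by (simp add: field_simps)
        moreover have "\<rho> * 2 ^ m \<le> \<rho> * 2 ^ Suc m" using \<rho> by simp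
        ultimately show ?thesis by linarith
      qed
      define k where "k = (LEAST k. r < \<rho> * 2 ^ Suc k)"
      have k1: "r < \<rho> * 2 ^ Suc k" unfolding k_def by (rule LeastI[of _ m]) (rule Pm)
      have k2: "\<rho> * 2 ^ k \<le> r"
      proof (cases k)
        case 0 then show ?thesis using r by simp
      next
        case (Suc j)
        have "\<not> r < \<rho> * 2 ^ Suc j" using not_less_Least[of j "\<lambda>k. r < \<rho> * 2 ^ Suc k"] Suc k_def by auto
        then show ?thesis using Suc by simp
      qed
      have zS: "z \<in> S k" using k1 k2 unfolding S_def r_def by auto
      have "ennreal (r powr (-c)) \<le> cc k"
        unfolding cc_def using k2 c \<rho> by (intro ennreal_leI powr_mono2') auto
      also have "cc k = cc k * indicator (S k) z" using zS by simp
      also have "\<dots> \<le> (\<Sum>k. cc k * indicator (S k) z)" by (rule ennreal_le_suminf_single)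
      finally show ?thesis using True by (simp add: r_def)
    qed
    have "(\<integral>\<^sup>+z. indicator {z. \<rho> \<le> norm (z - y)} z * ennreal (norm (z - y) powr (-c)) \<partial>lborel)
        \<le> (\<Sum>k. cc k * emeasure lborel (S k))"
      by (rule nn_integral_shells[OF Smeas pt])
    also have "\<dots> \<le> (\<Sum>k. ennreal (V * 2 ^ DIM('a) * \<rho> powr (n - c) * q ^ k))"
    proof (intro suminf_le allI)
      fix k
      have "emeasure lborel (S k) \<le> emeasure lborel (ball y (\<rho> * 2 ^ Suc k))"
        by (intro emeasure_mono) (auto simp: S_def dist_norm norm_minus_commute)
      also have "\<dots> = ennreal ((\<rho> * 2 ^ Suc k) ^ DIM('a) * V)"
        unfolding V_def using \<rho> by (intro emeasure_lborel_ball_eq) simp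
      finally have "cc k * emeasure lborel (S k) \<le> cc k * ennreal ((\<rho> * 2 ^ Suc k) ^ DIM('a) * V)"
        by (rule mult_left_mono) simp
      also have "\<dots> = ennreal ((\<rho> * 2 ^ k) powr (-c) * ((\<rho> * 2 ^ Suc k) ^ DIM('a) * V))"
        unfolding cc_def by (rule ennreal_mult[symmetric]) (use V0 \<rho> in auto)
      also have "(\<rho> * 2 ^ k) powr (-c) * ((\<rho> * 2 ^ Suc k) ^ DIM('a) * V) = V * 2 ^ DIM('a) * \<rho> powr (n - c) * q ^ k"
        unfolding q_def by (rule powr_calc2[OF \<rho>]) (simp add: n_def)
      finally show "cc k * emeasure lborel (S k) \<le> ennreal (V * 2 ^ DIM('a) * \<rho> powr (n - c) * q ^ k)" .
    qed auto
    also have "\<dots> = ennreal (V * 2 ^ DIM('a) * \<rho> powr (n - c) / (1 - q))"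
      using q0 V0 by (intro geom_ennreal) auto
    also have "\<dots> = ennreal (C * \<rho> powr (real DIM('a) - c))" unfolding C_def n_def by simp
    finally show "(\<integral>\<^sup>+z. indicator {z. \<rho> \<le> norm (z - y)} z * ennreal (norm (z - y) powr (-c)) \<partial>lborel)
       \<le> ennreal (C * \<rho> powr (real DIM('a) - c))" .
  qed
qed

definition kp :: "real \<Rightarrow> 'a::euclidean_space \<Rightarrow> 'a \<Rightarrow> ennreal" where
  "kp a x y = ennreal (norm (x - y) powr (-a))"

lemma kp_sym: "kp a x y = kp a y x"
  unfolding kp_def by (simp add: norm_minus_commute)

lemma kp_measurable[measurable]: "(\<lambda>z. kp a (f z) (g z)) \<in> borel_measurable M"
  if [measurable]: "f \<in> borel_measurable M" "g \<in> borel_measurable M" for f g :: "'b \<Rightarrow> 'a::euclidean_space"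
  unfolding kp_def by measurable

lemma powr_neg_anti: "0 \<le> (a::real) \<Longrightarrow> 0 < u \<Longrightarrow> u \<le> v \<Longrightarrow> v powr (-a) \<le> u powr (-a)"
  by (rule powr_mono2') auto

lemma comp_kernel:
  assumes a: "0 \<le> a" "a < real DIM('a)" and b: "0 \<le> b" "b < real DIM('a)"
    and ab: "real DIM('a) < a + b"
  shows "\<exists>C\<ge>0. \<forall>x y::'a::euclidean_space. x \<noteq> y \<longrightarrow>
     (\<integral>\<^sup>+z. kp a x z * kp b z y \<partial>lborel) \<le> ennreal (C * norm (x - y) powr (real DIM('a) - a - b))"
proof -
  define n where "n = real DIM('a)"
  obtain Ca where Ca: "Ca \<ge> 0" "\<And>y::'a. \<And>\<rho>. \<rho> > 0 \<Longrightarrow>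
     (\<integral>\<^sup>+z. indicator (ball y \<rho>) z * ennreal (norm (z - y) powr (-a)) \<partial>lborel) \<le> ennreal (Ca * \<rho> powr (n - a))"
    using radial_inner[OF a] unfolding n_def by blast
  obtain Cb where Cb: "Cb \<ge> 0" "\<And>y::'a. \<And>\<rho>. \<rho> > 0 \<Longrightarrow>
     (\<integral>\<^sup>+z. indicator (ball y \<rho>) z * ennreal (norm (z - y) powr (-b)) \<partial>lborel) \<le> ennreal (Cb * \<rho> powr (n - b))"
    using radial_inner[OF b] unfolding n_def by blast
  obtain Cc where Cc: "Cc \<ge> 0" "\<And>y::'a. \<And>\<rho>. \<rho> > 0 \<Longrightarrow>
     (\<integral>\<^sup>+z. indicator {z. \<rho> \<le> norm (z - y)} z * ennreal (norm (z - y) powr (-(a+b))) \<partial>lborel) \<le> ennreal (Cc * \<rho> powr (n - (a+b)))"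
    using radial_outer[OF ab] unfolding n_def by blast
  define K where "K = (Cb + Ca + 3 powr a * Cc) * 2 powr (a + b - n)"
  have K0: "K \<ge> 0" unfolding K_def using Ca Cb Cc by simp
  show ?thesis unfolding n_def[symmetric]
  proof (intro exI[of _ K] conjI allI impI K0)
    fix x y :: 'a assume xy: "x \<noteq> y"
    define r where "r = norm (x - y)"
    have r: "r > 0" using xy by (simp add: r_def)
    define \<rho> where "\<rho> = r / 2"
    have \<rho>: "\<rho> > 0" using r by (simp add: \<rho>_def)
    define g1 where "g1 z = indicator (ball y \<rho>) z * ennreal (norm (z - y) powr (-b))" for z
    define g2 where "g2 z = indicator (ball x \<rho>) z * ennreal (norm (z - x) powr (-a))" for z
    define g3 where "g3 z = indicator {z. \<rho> \<le> norm (z - y)} z * ennreal (norm (z - y) powr (-(a+b)))" for z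
    have pt: "kp a x z * kp b z y \<le> ennreal (\<rho> powr (-a)) * g1 z + ennreal (\<rho> powr (-b)) * g2 z + ennreal (3 powr a) * g3 z" for z
    proof -
      consider "z \<in> ball y \<rho>" | "z \<in> ball x \<rho>" | "z \<notin> ball y \<rho>" "z \<notin> ball x \<rho>" by blast
      then show ?thesis
      proof cases
        case 1
        have d1: "norm (z - y) < \<rho>" using 1 by (simp add: dist_norm norm_minus_commute)
        have "r \<le> norm (x - z) + norm (z - y)" unfolding r_def using norm_triangle_ineq[of "x - z" "z - y"] by simp
        hence d2: "\<rho> \<le> norm (x - z)" using d1 unfolding \<rho>_def by simp
        have "kp a x z \<le> ennreal (\<rho> powr (-a))" unfolding kp_def
          using d2 \<rho> a by (intro ennreal_leI powr_neg_anti) auto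
        hence "kp a x z * kp b z y \<le> ennreal (\<rho> powr (-a)) * g1 z"
          unfolding g1_def using 1 by (simp add: mult_right_mono kp_def[of b])
        then show ?thesis by (rule order_trans) (simp add: add.assoc)
      next
        case 2
        have d1: "norm (z - x) < \<rho>" using 2 by (simp add: dist_norm norm_minus_commute)
        have "r \<le> norm (x - z) + norm (z - y)" unfolding r_def using norm_triangle_ineq[of "x - z" "z - y"] by simp
        hence d2: "\<rho> \<le> norm (z - y)" using d1 unfolding \<rho>_def by (simp add: norm_minus_commute)
        have "kp b z y \<le> ennreal (\<rho> powr (-b))" unfolding kp_def
          using d2 \<rho> b by (intro ennreal_leI powr_neg_anti) auto
        hence "kp b z y * kp a x z \<le> ennreal (\<rho> powr (-b)) * kp a x z" by (rule mult_right_mono) simp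
        moreover have "kp a x z = g2 z" unfolding g2_def kp_def using 2 by (simp add: norm_minus_commute)
        ultimately have "kp a x z * kp b z y \<le> ennreal (\<rho> powr (-b)) * g2 z" by (simp add: mult.commute)
        then show ?thesis by (rule order_trans) (simp add: add_ac)
      next
        case 3
        have d1: "\<rho> \<le> norm (z - y)" "\<rho> \<le> norm (x - z)" using 3 by (auto simp: dist_norm norm_minus_commute)
        have "norm (z - y) \<le> norm (z - x) + r" unfolding r_def using norm_triangle_ineq[of "z - x" "x - y"] by simp
        hence d3: "norm (z - y) / 3 \<le> norm (x - z)" using d1 unfolding \<rho>_def by (simp add: norm_minus_commute)
        have "norm (x - z) powr (-a) \<le> (norm (z - y) / 3) powr (-a)"
          using d3 d1 \<rho> a by (intro powr_neg_anti) auto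
        also have "(norm (z - y) / 3) powr (-a) = 3 powr a * norm (z - y) powr (-a)"
        proof -
          have "(norm (z - y) / 3) powr (-a) = norm (z - y) powr (-a) / 3 powr (-a)" by (rule powr_divide)
          also have "(3::real) powr (-a) = inverse (3 powr a)" by (rule powr_minus)
          finally show ?thesis by (simp only: divide_inverse inverse_inverse_eq mult.commute)
        qed
        finally have e: "norm (x - z) powr (-a) \<le> 3 powr a * norm (z - y) powr (-a)" .
        have "norm (x - z) powr (-a) * norm (z - y) powr (-b) \<le> 3 powr a * norm (z - y) powr (-a) * norm (z - y) powr (-b)"
          by (rule mult_right_mono[OF e]) simp
        also have "\<dots> = 3 powr a * norm (z - y) powr (-(a+b))" by (simp add: powr_add[symmetric] mult.assoc)
        finally have "kp a x z * kp b z y \<le> ennreal (3 powr a) * g3 z"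
          unfolding kp_def g3_def using d1 by (auto simp: ennreal_mult[symmetric] intro!: ennreal_leI)
        then show ?thesis by (rule order_trans) simp
      qed
    qed
    have "(\<integral>\<^sup>+z. kp a x z * kp b z y \<partial>lborel) \<le>
      (\<integral>\<^sup>+z. ennreal (\<rho> powr (-a)) * g1 z + ennreal (\<rho> powr (-b)) * g2 z + ennreal (3 powr a) * g3 z \<partial>lborel)"
      by (rule nn_integral_mono) (rule pt)
    also have "\<dots> = ennreal (\<rho> powr (-a)) * integral\<^sup>N lborel g1 + ennreal (\<rho> powr (-b)) * integral\<^sup>N lborel g2
        + ennreal (3 powr a) * integral\<^sup>N lborel g3"
    proof -
      have m1: "g1 \<in> borel_measurable lborel" unfolding g1_def
        by (intro borel_measurable_times_ennreal borel_measurable_indicator) (auto simp: borel_open)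
      have m2: "g2 \<in> borel_measurable lborel" unfolding g2_def
        by (intro borel_measurable_times_ennreal borel_measurable_indicator) (auto simp: borel_open)
      have m3: "g3 \<in> borel_measurable lborel" unfolding g3_def
        by (intro borel_measurable_times_ennreal borel_measurable_indicator) auto
      have "(\<integral>\<^sup>+z. ennreal (\<rho> powr (-a)) * g1 z + ennreal (\<rho> powr (-b)) * g2 z + ennreal (3 powr a) * g3 z \<partial>lborel)
        = (\<integral>\<^sup>+z. ennreal (\<rho> powr (-a)) * g1 z + ennreal (\<rho> powr (-b)) * g2 z \<partial>lborel) + (\<integral>\<^sup>+z. ennreal (3 powr a) * g3 z \<partial>lborel)"
        by (rule nn_integral_add) (use m1 m2 m3 in auto)
      also have "(\<integral>\<^sup>+z. ennreal (\<rho> powr (-a)) * g1 z + ennreal (\<rho> powr (-b)) * g2 z \<partial>lborel)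
        = (\<integral>\<^sup>+z. ennreal (\<rho> powr (-a)) * g1 z \<partial>lborel) + (\<integral>\<^sup>+z. ennreal (\<rho> powr (-b)) * g2 z \<partial>lborel)"
        by (rule nn_integral_add) (use m1 m2 in auto)
      finally show ?thesis using m1 m2 m3 by (simp only: nn_integral_cmult)
    qed
    also have "\<dots> \<le> ennreal (\<rho> powr (-a)) * ennreal (Cb * \<rho> powr (n - b)) + ennreal (\<rho> powr (-b)) * ennreal (Ca * \<rho> powr (n - a))
        + ennreal (3 powr a) * ennreal (Cc * \<rho> powr (n - (a+b)))"
      unfolding g1_def g2_def g3_def
      by (intro add_mono mult_left_mono Ca(2) Cb(2) Cc(2) \<rho>) auto
    also have "\<dots> = ennreal ((Cb + Ca + 3 powr a * Cc) * \<rho> powr (n - a - b))"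
    proof -
      define X where "X = \<rho> powr (n - a - b)"
      have X0: "X \<ge> 0" unfolding X_def by simp
      have e1: "\<rho> powr (-a) * (Cb * \<rho> powr (n - b)) = Cb * X"
        unfolding X_def by (simp add: powr_add[symmetric] algebra_simps)
      have e2: "\<rho> powr (-b) * (Ca * \<rho> powr (n - a)) = Ca * X"
        unfolding X_def by (simp add: powr_add[symmetric] algebra_simps)
      have e3: "3 powr a * (Cc * \<rho> powr (n - (a + b))) = 3 powr a * Cc * X"
        unfolding X_def by (simp add: algebra_simps)
      have f1: "ennreal (\<rho> powr (-a)) * ennreal (Cb * \<rho> powr (n - b)) = ennreal (Cb * X)"
        using ennreal_mult'[of "\<rho> powr (-a)" "Cb * \<rho> powr (n - b)"] e1 by simp
      have f2: "ennreal (\<rho> powr (-b)) * ennreal (Ca * \<rho> powr (n - a)) = ennreal (Ca * X)"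
        using ennreal_mult'[of "\<rho> powr (-b)" "Ca * \<rho> powr (n - a)"] e2 by simp
      have f3: "ennreal (3 powr a) * ennreal (Cc * \<rho> powr (n - (a + b))) = ennreal (3 powr a * Cc * X)"
        using ennreal_mult'[of "3 powr a" "Cc * \<rho> powr (n - (a + b))"] e3 by simp
      have "ennreal (Cb * X) + ennreal (Ca * X) + ennreal (3 powr a * Cc * X) = ennreal (Cb * X + Ca * X + 3 powr a * Cc * X)"
        using Ca Cb Cc X0 by (simp add: ennreal_plus)
      also have "Cb * X + Ca * X + 3 powr a * Cc * X = (Cb + Ca + 3 powr a * Cc) * X" by (simp add: algebra_simps)
      finally show ?thesis unfolding f1 f2 f3 X_def .
    qed
    also have "(Cb + Ca + 3 powr a * Cc) * \<rho> powr (n - a - b) = K * r powr (n - a - b)"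
    proof -
      have "\<rho> powr (n - a - b) = r powr (n - a - b) * 2 powr (a + b - n)"
      proof -
        have "\<rho> powr (n - a - b) = r powr (n - a - b) / 2 powr (n - a - b)" unfolding \<rho>_def by (rule powr_divide)
        also have "(2::real) powr (n - a - b) = inverse (2 powr (a + b - n))" by (simp add: powr_minus[symmetric] diff_diff_eq)
        finally show ?thesis by (simp only: divide_inverse inverse_inverse_eq)
      qed
      then show ?thesis unfolding K_def by (simp add: algebra_simps)
    qed
    finally show "(\<integral>\<^sup>+z. kp a x z * kp b z y \<partial>lborel) \<le> ennreal (K * norm (x - y) powr (n - a - b))"
      unfolding r_def .
  qed
qed

lemma open_sets_lebesgue: "open S \<Longrightarrow> S \<in> sets lebesgue"
  by (simp add: borel_open sets_completionI_sets)

lemma ident_lebesgue_on_measurable[measurable]: "(\<lambda>x. x) \<in> lebesgue_on S \<rightarrow>\<^sub>M borel"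
  by (intro measurable_restrict_space1 measurable_completion) simp

lemma min_le_powr:
  fixes u \<theta> :: real
  assumes "0 \<le> u" "0 \<le> \<theta>" "\<theta> \<le> 1"
  shows "min u 1 \<le> u powr \<theta>"
proof (cases "u \<le> 1")
  case True
  show ?thesis
  proof (cases "u = 0")
    case False
    then have "u powr 1 \<le> u powr \<theta>" using True assms by (intro powr_mono') auto
    then show ?thesis using False True assms by simp
  qed simp
next
  case False
  then have "1 \<le> u powr \<theta>" using assms by (simp add: ge_one_powr_ge_zero)
  then show ?thesis by simp
qed

locale eigset =
  fixes \<Omega> :: "'a::euclidean_space set" and G :: "'a \<Rightarrow> 'a \<Rightarrow> real" and s \<gamma> c0 c1 :: real
  assumes dom: "bounded_domain \<Omega>"
    and Gmeas: "(\<lambda>z. G (fst z) (snd z)) \<in> borel_measurable (lebesgue_on \<Omega> \<Otimes>\<^sub>M lebesgue_on \<Omega>)"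
    and K2: "K2 \<Omega> G s \<gamma> c0 c1"
    and dim2: "DIM('a) \<ge> 2"
begin

abbreviation "M \<equiv> lebesgue_on \<Omega>"
abbreviation "dd x \<equiv> infdist x (frontier \<Omega>)"
definition "R = diameter \<Omega> + 1"

lemma Om_open: "open \<Omega>" and Om_bdd: "bounded \<Omega>" and Om_ne: "\<Omega> \<noteq> {}"
  using dom by (auto simp: bounded_domain_def)

lemma Om_sets: "\<Omega> \<in> sets lebesgue" by (rule open_sets_lebesgue[OF Om_open])

lemma Om_lmeas: "\<Omega> \<in> lmeasurable" by (rule bounded_set_imp_lmeasurable[OF Om_bdd Om_sets])

lemma space_M[simp]: "space M = \<Omega>" by simp

lemma finM: "finite_measure M" by (rule finite_measure_lebesgue_on[OF Om_lmeas])

sublocale MM: pair_sigma_finite M M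
proof -
  interpret finite_measure M by (rule finM)
  show "pair_sigma_finite M M" by unfold_locales
qed

interpretation Mfin: finite_measure M by (rule finM)

lemma s_pos: "0 < s" and s_le: "s \<le> 1" and g_pos: "0 < \<gamma>" and g_le: "\<gamma> \<le> 1"
  and c0_pos: "0 < c0" and c1_pos: "0 < c1"
  using K2 by (auto simp: K2_def)

lemma nn_ge2: "real DIM('a) \<ge> 2" using dim2 by simp

lemma R_pos: "R > 0" unfolding R_def using diameter_ge_0[OF Om_bdd] by simp

lemma dist_lt_R: "x \<in> \<Omega> \<Longrightarrow> y \<in> \<Omega> \<Longrightarrow> norm (x - y) < R"
  unfolding R_def using diameter_bounded_bound[OF Om_bdd, of x y] by (simp add: dist_norm)

lemma Om_sub_ball: "x \<in> \<Omega> \<Longrightarrow> \<Omega> \<subseteq> ball x R"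
  using dist_lt_R by (auto simp: dist_norm)

lemma frontier_ne: "frontier \<Omega> \<noteq> {}"
proof
  assume "frontier \<Omega> = {}"
  then have "\<Omega> = UNIV" using Om_ne frontier_eq_empty by blast
  then show False using Om_bdd not_bounded_UNIV by simp
qed

lemma dd_pos: "x \<in> \<Omega> \<Longrightarrow> dd x > 0"
  using Om_open frontier_ne
  by (intro infdist_pos_not_in_closed) (auto simp: frontier_def interior_open)

lemma dd_le_R: "x \<in> \<Omega> \<Longrightarrow> dd x \<le> R"
proof -
  assume x: "x \<in> \<Omega>"
  obtain p where p: "p \<in> frontier \<Omega>" using frontier_ne by blast
  have "dd x \<le> dist x p" by (rule infdist_le[OF p])
  also have "\<dots> \<le> diameter (closure \<Omega>)"
    using x p Om_bdd by (intro diameter_bounded_bound) (auto simp: frontier_def closure_subset[THEN subsetD])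
  also have "\<dots> = diameter \<Omega>" by (rule diameter_closure[OF Om_bdd])
  finally show ?thesis unfolding R_def by simp
qed

lemma dd_lip: "dd z \<le> dd x + norm (x - z)"
  using infdist_triangle[of z "frontier \<Omega>" x] by (simp add: dist_norm norm_minus_commute)

lemma nn_M_eq: "integral\<^sup>N M f = (\<integral>\<^sup>+z. f z * indicator \<Omega> z \<partial>lborel)"
proof -
  have "integral\<^sup>N M f = (\<integral>\<^sup>+z. f z * indicator \<Omega> z \<partial>lebesgue)"
    by (rule nn_integral_restrict_space) (simp add: Om_sets)
  also have "\<dots> = (\<integral>\<^sup>+z. f z * indicator \<Omega> z \<partial>lborel)" by (rule nn_integral_completion)
  finally show ?thesis .
qed

lemma nn_M_le: "integral\<^sup>N M f \<le> integral\<^sup>N lborel f"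
  unfolding nn_M_eq by (intro nn_integral_mono) (auto simp: indicator_def)

end

context eigset begin

lemma ball_int_M:
  assumes "0 \<le> c" "c < real DIM('a)"
  shows "\<exists>C\<ge>0. \<forall>x\<in>\<Omega>. (\<integral>\<^sup>+z. kp c x z \<partial>M) \<le> ennreal C"
proof -
  obtain C where C: "C \<ge> 0" "\<And>y::'a. \<And>\<rho>. \<rho> > 0 \<Longrightarrow>
     (\<integral>\<^sup>+z. indicator (ball y \<rho>) z * ennreal (norm (z - y) powr (-c)) \<partial>lborel) \<le> ennreal (C * \<rho> powr (real DIM('a) - c))"
    using radial_inner[OF assms] by blast
  show ?thesis
  proof (intro exI[of _ "C * R powr (real DIM('a) - c)"] conjI ballI)
    show "0 \<le> C * R powr (real DIM('a) - c)" using C by simp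
    fix x assume x: "x \<in> \<Omega>"
    have "(\<integral>\<^sup>+z. kp c x z \<partial>M) = (\<integral>\<^sup>+z. kp c x z * indicator \<Omega> z \<partial>lborel)" by (rule nn_M_eq)
    also have "\<dots> \<le> (\<integral>\<^sup>+z. indicator (ball x R) z * ennreal (norm (z - x) powr (-c)) \<partial>lborel)"
      using Om_sub_ball[OF x] by (intro nn_integral_mono) (auto simp: indicator_def kp_def norm_minus_commute)
    also have "\<dots> \<le> ennreal (C * R powr (real DIM('a) - c))" by (rule C(2)[OF R_pos])
    finally show "(\<integral>\<^sup>+z. kp c x z \<partial>M) \<le> ennreal (C * R powr (real DIM('a) - c))" .
  qed
qed

lemma kp_prod_le:
  assumes "0 \<le> a" "0 \<le> b"
  shows "kp a x z * kp b z y \<le> kp (a + b) x z + kp (a + b) z y"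
proof -
  define u where "u = norm (x - z)"
  define v where "v = norm (z - y)"
  show ?thesis
  proof (cases "u = 0 \<or> v = 0")
    case True
    then show ?thesis by (auto simp: kp_def u_def v_def)
  next
    case False
    then have uv: "u > 0" "v > 0" by (auto simp: u_def v_def)
    define w where "w = min u v"
    have w: "w > 0" "w \<le> u" "w \<le> v" using uv by (auto simp: w_def)
    have "u powr (-a) * v powr (-b) \<le> w powr (-a) * w powr (-b)"
      using w assms by (intro mult_mono powr_neg_anti) auto
    also have "\<dots> = w powr (-(a+b))" by (simp add: powr_add[symmetric])
    also have "\<dots> \<le> u powr (-(a+b)) + v powr (-(a+b))"
      by (cases "u \<le> v") (auto simp: w_def min_def)
    finally have "u powr (-a) * v powr (-b) \<le> u powr (-(a+b)) + v powr (-(a+b))" .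
    then show ?thesis unfolding kp_def u_def[symmetric] v_def[symmetric]
      by (simp add: ennreal_mult[symmetric] ennreal_plus[symmetric] del: ennreal_plus)
  qed
qed

lemma bcomp_M:
  assumes "0 \<le> a" "0 \<le> b" "a + b < real DIM('a)"
  shows "\<exists>C\<ge>0. \<forall>x\<in>\<Omega>. \<forall>y\<in>\<Omega>. (\<integral>\<^sup>+z. kp a x z * kp b z y \<partial>M) \<le> ennreal C"
proof -
  obtain C where C: "C \<ge> 0" "\<And>x. x \<in> \<Omega> \<Longrightarrow> (\<integral>\<^sup>+z. kp (a+b) x z \<partial>M) \<le> ennreal C"
    using ball_int_M[of "a+b"] assms by auto
  show ?thesis
  proof (intro exI[of _ "C + C"] conjI ballI)
    show "0 \<le> C + C" using C by simp
    fix x y assume x: "x \<in> \<Omega>" and y: "y \<in> \<Omega>"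
    have "(\<integral>\<^sup>+z. kp a x z * kp b z y \<partial>M) \<le> (\<integral>\<^sup>+z. kp (a+b) x z + kp (a+b) z y \<partial>M)"
      by (intro nn_integral_mono kp_prod_le assms)
    also have "\<dots> = (\<integral>\<^sup>+z. kp (a+b) x z \<partial>M) + (\<integral>\<^sup>+z. kp (a+b) z y \<partial>M)"
      by (rule nn_integral_add) auto
    also have "\<dots> \<le> ennreal C + ennreal C"
      using C(2)[OF x] C(2)[OF y] by (intro add_mono) (auto simp: kp_sym[of _ _ y])
    finally show "(\<integral>\<^sup>+z. kp a x z * kp b z y \<partial>M) \<le> ennreal (C + C)" using C by (metis ennreal_plus)
  qed
qed

lemma comp_M:
  assumes "0 \<le> a" "a < real DIM('a)" "0 \<le> b" "b < real DIM('a)" "real DIM('a) < a + b"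
  shows "\<exists>C\<ge>0. \<forall>x y. x \<noteq> y \<longrightarrow>
     (\<integral>\<^sup>+z. kp a x z * kp b z y \<partial>M) \<le> ennreal C * kp (a + b - real DIM('a)) x y"
proof -
  obtain C where C: "C \<ge> 0" "\<And>x y::'a. x \<noteq> y \<Longrightarrow>
     (\<integral>\<^sup>+z. kp a x z * kp b z y \<partial>lborel) \<le> ennreal (C * norm (x - y) powr (real DIM('a) - a - b))"
    using comp_kernel[OF assms] by blast
  show ?thesis
  proof (intro exI[of _ C] conjI allI impI)
    show "0 \<le> C" by fact
    fix x y :: 'a assume xy: "x \<noteq> y"
    have "(\<integral>\<^sup>+z. kp a x z * kp b z y \<partial>M) \<le> (\<integral>\<^sup>+z. kp a x z * kp b z y \<partial>lborel)" by (rule nn_M_le)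
    also have "\<dots> \<le> ennreal (C * norm (x - y) powr (real DIM('a) - a - b))" by (rule C(2)[OF xy])
    also have "\<dots> = ennreal C * kp (a + b - real DIM('a)) x y"
      unfolding kp_def using C by (simp add: ennreal_mult algebra_simps)
    finally show "(\<integral>\<^sup>+z. kp a x z * kp b z y \<partial>M) \<le> ennreal C * kp (a + b - real DIM('a)) x y" .
  qed
qed

definition Kb :: "'a \<Rightarrow> 'a \<Rightarrow> real" where
  "Kb x z = c1 * norm (x - z) powr (-(real DIM('a) - 2 * s)) * min (dd x powr \<gamma> / norm (x - z) powr \<gamma>) 1"

lemma Kb_nonneg: "0 \<le> Kb x z"
  unfolding Kb_def using c1_pos by simp

lemma G_bound: "AE x in M. AE z in M. 0 \<le> G x z \<and> G x z \<le> Kb x z"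
proof -
  have "AE p in M \<Otimes>\<^sub>M M. 0 \<le> G (fst p) (snd p) \<and> G (fst p) (snd p) \<le> Kb (fst p) (snd p)"
    using K2 unfolding K2_def
  proof (elim conjE, elim AE_mp, intro AE_I2 impI conjI)
    fix p :: "'a \<times> 'a"
    define x where "x = fst p"
    define z where "z = snd p"
    assume H: "c0 * delta_pow \<Omega> \<gamma> (fst p) * delta_pow \<Omega> \<gamma> (snd p) \<le> G (fst p) (snd p) \<and>
          G (fst p) (snd p) \<le> c1 / norm (fst p - snd p) powr (real DIM('a) - 2 * s) *
            min (delta_pow \<Omega> \<gamma> (fst p) / norm (fst p - snd p) powr \<gamma>) 1 *
            min (delta_pow \<Omega> \<gamma> (snd p) / norm (fst p - snd p) powr \<gamma>) 1"
    have "0 \<le> c0 * delta_pow \<Omega> \<gamma> x * delta_pow \<Omega> \<gamma> z"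
      using c0_pos by (simp add: delta_pow_def)
    then show "0 \<le> G (fst p) (snd p)" using H unfolding x_def z_def by linarith
    define A where "A = c1 / norm (x - z) powr (real DIM('a) - 2 * s) * min (delta_pow \<Omega> \<gamma> x / norm (x - z) powr \<gamma>) 1"
    define B where "B = min (delta_pow \<Omega> \<gamma> z / norm (x - z) powr \<gamma>) 1"
    have A0: "A \<ge> 0" unfolding A_def delta_pow_def using c1_pos by simp
    have B: "B \<le> 1" unfolding B_def by simp
    have "A * B \<le> A" using A0 B by (simp add: mult_left_le)
    moreover have "A = Kb x z" unfolding A_def Kb_def delta_pow_def by (simp add: divide_powr_uminus)
    moreover have "G (fst p) (snd p) \<le> A * B" using H unfolding A_def B_def x_def z_def by linarith
    ultimately show "G (fst p) (snd p) \<le> Kb (fst p) (snd p)" unfolding x_def z_def by linarith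
  qed
  from MM.AE_pair[OF this] show ?thesis by simp
qed

end

context eigset begin

lemma STEP:
  assumes eig: "aeq \<Omega> (Ginv \<Omega> G \<Phi>) (\<lambda>x. m * \<Phi> x)"
    and g: "AE z in M. ennreal \<bar>\<Phi> z\<bar> \<le> g z"
  shows "AE x in M. ennreal (\<bar>m\<bar> * \<bar>\<Phi> x\<bar>) \<le> (\<integral>\<^sup>+z. ennreal (Kb x z) * g z \<partial>M)"
  using G_bound eig[unfolded aeq_def]
proof (elim AE_mp, intro AE_I2 impI)
  fix x
  assume H2: "AE z in M. 0 \<le> G x z \<and> G x z \<le> Kb x z"
    and H1: "Ginv \<Omega> G \<Phi> x = m * \<Phi> x"
  have "ennreal (\<bar>m\<bar> * \<bar>\<Phi> x\<bar>) = ennreal (norm (\<integral>z. G x z * \<Phi> z \<partial>M))"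
    using H1 unfolding Ginv_def by (simp add: abs_mult)
  also have "\<dots> \<le> (\<integral>\<^sup>+z. norm (G x z * \<Phi> z) \<partial>M)"
  proof (cases "integrable M (\<lambda>z. G x z * \<Phi> z)")
    case True
    then show ?thesis by (rule integral_norm_bound_ennreal)
  next
    case False
    then show ?thesis by (simp add: not_integrable_integral_eq)
  qed
  also have "\<dots> \<le> (\<integral>\<^sup>+z. ennreal (Kb x z) * g z \<partial>M)"
    using H2 g
  proof (intro nn_integral_mono_AE, elim AE_mp, intro AE_I2 impI)
    fix z assume G: "0 \<le> G x z \<and> G x z \<le> Kb x z" and gz: "ennreal \<bar>\<Phi> z\<bar> \<le> g z"
    have "norm (G x z * \<Phi> z) \<le> Kb x z * \<bar>\<Phi> z\<bar>"
      using G by (simp add: abs_mult mult_right_mono)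
    hence "ennreal (norm (G x z * \<Phi> z)) \<le> ennreal (Kb x z * \<bar>\<Phi> z\<bar>)" by (rule ennreal_leI)
    also have "\<dots> = ennreal (Kb x z) * ennreal \<bar>\<Phi> z\<bar>" using Kb_nonneg by (simp add: ennreal_mult)
    also have "\<dots> \<le> ennreal (Kb x z) * g z" by (rule mult_left_mono[OF gz]) simp
    finally show "ennreal (norm (G x z * \<Phi> z)) \<le> ennreal (Kb x z) * g z" .
  qed
  finally show "ennreal (\<bar>m\<bar> * \<bar>\<Phi> x\<bar>) \<le> (\<integral>\<^sup>+z. ennreal (Kb x z) * g z \<partial>M)" .
qed

lemma Kb_le_kp:
  assumes t: "0 < t" "t \<le> 2 * s" and x: "x \<in> \<Omega>" and z: "z \<in> \<Omega>"
  shows "ennreal (Kb x z) \<le> ennreal (c1 * R powr (2 * s - t)) * kp (real DIM('a) - t) x z"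
proof (cases "x = z")
  case True
  then show ?thesis by (simp add: Kb_def kp_def)
next
  case False
  define r where "r = norm (x - z)"
  have r: "0 < r" "r < R" using False dist_lt_R[OF x z] by (auto simp: r_def)
  have "Kb x z \<le> c1 * r powr (-(real DIM('a) - 2 * s))"
    unfolding Kb_def r_def[symmetric] using c1_pos by (intro mult_left_le) auto
  also have "r powr (-(real DIM('a) - 2 * s)) = r powr (2 * s - t) * r powr (-(real DIM('a) - t))"
    by (simp add: powr_add[symmetric])
  also have "\<dots> \<le> R powr (2 * s - t) * r powr (-(real DIM('a) - t))"
    using r t by (intro mult_right_mono powr_mono2) auto
  finally have "Kb x z \<le> c1 * R powr (2 * s - t) * r powr (-(real DIM('a) - t))"
    using c1_pos by (simp add: mult.assoc)
  then show ?thesis unfolding kp_def r_def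
    using c1_pos by (simp add: ennreal_mult[symmetric])
qed

end

context eigset begin

lemma swap_int:
  assumes Phim[measurable]: "\<Phi> \<in> borel_measurable M"
  shows "(\<integral>\<^sup>+z. kp b x z * (\<integral>\<^sup>+y. kp a z y * ennreal \<bar>\<Phi> y\<bar> \<partial>M) \<partial>M)
       = (\<integral>\<^sup>+y. (\<integral>\<^sup>+z. kp b x z * kp a z y \<partial>M) * ennreal \<bar>\<Phi> y\<bar> \<partial>M)"
proof -
  have "(\<integral>\<^sup>+z. kp b x z * (\<integral>\<^sup>+y. kp a z y * ennreal \<bar>\<Phi> y\<bar> \<partial>M) \<partial>M)
      = (\<integral>\<^sup>+z. (\<integral>\<^sup>+y. kp b x z * (kp a z y * ennreal \<bar>\<Phi> y\<bar>) \<partial>M) \<partial>M)"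
    by (intro nn_integral_cong nn_integral_cmult[symmetric]) measurable
  also have "\<dots> = (\<integral>\<^sup>+y. (\<integral>\<^sup>+z. kp b x z * (kp a z y * ennreal \<bar>\<Phi> y\<bar>) \<partial>M) \<partial>M)"
    by (rule MM.Fubini'[symmetric]) measurable
  also have "\<dots> = (\<integral>\<^sup>+y. (\<integral>\<^sup>+z. kp b x z * kp a z y \<partial>M) * ennreal \<bar>\<Phi> y\<bar> \<partial>M)"
    by (intro nn_integral_cong) (simp add: nn_integral_multc[symmetric] mult.assoc)
  finally show ?thesis .
qed

lemma AE_neq: "AE y in M. y \<noteq> x"
proof -
  have "emeasure lborel {x} = 0" by simp
  hence "emeasure lebesgue {x} = 0" by (simp add: emeasure_completion)
  hence "{x} \<in> null_sets lebesgue" by (auto simp: null_sets_def)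
  hence "{x} \<inter> \<Omega> \<in> null_sets M"
  proof -
    have "{x} \<inter> \<Omega> \<in> null_sets lebesgue"
      using \<open>{x} \<in> null_sets lebesgue\<close> by (cases "x \<in> \<Omega>") auto
    then show ?thesis by (simp add: null_sets_restrict_space Om_sets)
  qed
  from AE_not_in[OF this] show ?thesis by (rule AE_mp) (intro AE_I2, auto)
qed

end

lemma ennreal_div_abs:
  assumes "ennreal (\<bar>m\<bar> * u) \<le> X" "m \<noteq> 0" "0 \<le> u"
  shows "ennreal u \<le> ennreal (1 / \<bar>m\<bar>) * X"
proof -
  have "ennreal u = ennreal (1 / \<bar>m\<bar>) * ennreal (\<bar>m\<bar> * u)"
    using assms by (simp add: ennreal_mult[symmetric])
  also have "\<dots> \<le> ennreal (1 / \<bar>m\<bar>) * X" by (rule mult_left_mono[OF assms(1)]) simp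
  finally show ?thesis .
qed

context eigset begin

lemma inner_meas[measurable]:
  assumes [measurable]: "\<Phi> \<in> borel_measurable M"
  shows "(\<lambda>z. \<integral>\<^sup>+y. kp a z y * ennreal \<bar>\<Phi> y\<bar> \<partial>M) \<in> borel_measurable M"
  by measurable

lemma ITER:
  assumes t: "0 < t" "t \<le> 2 * s" and a: "t < a" "a < real DIM('a)" and m: "m \<noteq> 0"
  shows "\<exists>K\<ge>0. \<forall>\<Phi> A. \<Phi> \<in> borel_measurable M \<longrightarrow> aeq \<Omega> (Ginv \<Omega> G \<Phi>) (\<lambda>x. m * \<Phi> x) \<longrightarrow>
     (AE z in M. ennreal \<bar>\<Phi> z\<bar> \<le> A * (\<integral>\<^sup>+y. kp a z y * ennreal \<bar>\<Phi> y\<bar> \<partial>M)) \<longrightarrow>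
     (AE x in M. ennreal \<bar>\<Phi> x\<bar> \<le> A * ennreal K * (\<integral>\<^sup>+y. kp (a - t) x y * ennreal \<bar>\<Phi> y\<bar> \<partial>M))"
proof -
  have n2: "2 \<le> real DIM('a)" by (rule nn_ge2)
  obtain C where C: "C \<ge> 0" "\<And>x y. x \<noteq> y \<Longrightarrow>
     (\<integral>\<^sup>+z. kp (real DIM('a) - t) x z * kp a z y \<partial>M) \<le> ennreal C * kp (real DIM('a) - t + a - real DIM('a)) x y"
    using comp_M[of "real DIM('a) - t" a] t a n2 s_le by auto
  define c' where "c' = c1 * R powr (2 * s - t)"
  have c'0: "c' \<ge> 0" unfolding c'_def using c1_pos by simp
  define K where "K = 1 / \<bar>m\<bar> * (c' * C)"
  show ?thesis
  proof (intro exI[of _ K] conjI allI impI)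
    show "K \<ge> 0" unfolding K_def using c'0 C by simp
    fix \<Phi> A
    assume Phim[measurable]: "\<Phi> \<in> borel_measurable M"
      and eig: "aeq \<Omega> (Ginv \<Omega> G \<Phi>) (\<lambda>x. m * \<Phi> x)"
      and bnd: "AE z in M. ennreal \<bar>\<Phi> z\<bar> \<le> A * (\<integral>\<^sup>+y. kp a z y * ennreal \<bar>\<Phi> y\<bar> \<partial>M)"
    define I where "I z = (\<integral>\<^sup>+y. kp a z y * ennreal \<bar>\<Phi> y\<bar> \<partial>M)" for z
    have Im[measurable]: "I \<in> borel_measurable M" unfolding I_def by measurable
    from STEP[OF eig bnd[folded I_def]] AE_space
    show "AE x in M. ennreal \<bar>\<Phi> x\<bar> \<le> A * ennreal K * (\<integral>\<^sup>+y. kp (a - t) x y * ennreal \<bar>\<Phi> y\<bar> \<partial>M)"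
    proof (elim AE_mp, intro AE_I2 impI)
      fix x assume H: "ennreal (\<bar>m\<bar> * \<bar>\<Phi> x\<bar>) \<le> (\<integral>\<^sup>+z. ennreal (Kb x z) * (A * I z) \<partial>M)"
        and x: "x \<in> space M"
      have "(\<integral>\<^sup>+z. ennreal (Kb x z) * (A * I z) \<partial>M) \<le> (\<integral>\<^sup>+z. ennreal c' * kp (real DIM('a) - t) x z * (A * I z) \<partial>M)"
        unfolding c'_def using x
        by (intro nn_integral_mono mult_right_mono Kb_le_kp t) auto
      also have "\<dots> = (\<integral>\<^sup>+z. (ennreal c' * A) * (kp (real DIM('a) - t) x z * I z) \<partial>M)"
        by (intro nn_integral_cong) (simp add: ac_simps)
      also have "\<dots> = ennreal c' * A * (\<integral>\<^sup>+z. kp (real DIM('a) - t) x z * I z \<partial>M)"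
        by (rule nn_integral_cmult) measurable
      also have "(\<integral>\<^sup>+z. kp (real DIM('a) - t) x z * I z \<partial>M)
          = (\<integral>\<^sup>+y. (\<integral>\<^sup>+z. kp (real DIM('a) - t) x z * kp a z y \<partial>M) * ennreal \<bar>\<Phi> y\<bar> \<partial>M)"
        unfolding I_def by (rule swap_int[OF Phim])
      also have "\<dots> \<le> (\<integral>\<^sup>+y. (ennreal C * kp (a - t) x y) * ennreal \<bar>\<Phi> y\<bar> \<partial>M)"
        using AE_neq[of x]
      proof (intro nn_integral_mono_AE, elim AE_mp, intro AE_I2 impI)
        fix y assume "y \<noteq> x"
        then have "(\<integral>\<^sup>+z. kp (real DIM('a) - t) x z * kp a z y \<partial>M) \<le> ennreal C * kp (a - t) x y"
          using C(2)[of x y] by (simp add: algebra_simps)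
        then show "(\<integral>\<^sup>+z. kp (real DIM('a) - t) x z * kp a z y \<partial>M) * ennreal \<bar>\<Phi> y\<bar> \<le> (ennreal C * kp (a - t) x y) * ennreal \<bar>\<Phi> y\<bar>"
          by (rule mult_right_mono) simp
      qed
      also have "\<dots> = ennreal C * (\<integral>\<^sup>+y. kp (a - t) x y * ennreal \<bar>\<Phi> y\<bar> \<partial>M)"
        by (simp add: nn_integral_cmult mult.assoc)
      finally have "ennreal (\<bar>m\<bar> * \<bar>\<Phi> x\<bar>) \<le> ennreal c' * A * (ennreal C * (\<integral>\<^sup>+y. kp (a - t) x y * ennreal \<bar>\<Phi> y\<bar> \<partial>M))"
        using H by (simp add: mult_left_mono)
      from ennreal_div_abs[OF this m] 
      have "ennreal \<bar>\<Phi> x\<bar> \<le> ennreal (1 / \<bar>m\<bar>) * (ennreal c' * A * (ennreal C * (\<integral>\<^sup>+y. kp (a - t) x y * ennreal \<bar>\<Phi> y\<bar> \<partial>M)))"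
        by simp
      also have "\<dots> = A * ennreal K * (\<integral>\<^sup>+y. kp (a - t) x y * ennreal \<bar>\<Phi> y\<bar> \<partial>M)"
      proof -
        have "ennreal K = ennreal (1 / \<bar>m\<bar>) * (ennreal c' * ennreal C)"
          unfolding K_def using c'0 C
          by (metis ennreal_mult abs_ge_zero divide_nonneg_nonneg zero_le_one mult_nonneg_nonneg)
        then show ?thesis by (simp add: ac_simps)
      qed
      finally show "ennreal \<bar>\<Phi> x\<bar> \<le> A * ennreal K * (\<integral>\<^sup>+y. kp (a - t) x y * ennreal \<bar>\<Phi> y\<bar> \<partial>M)" .
    qed
  qed
qed

end

context eigset begin

lemma BASE:
  assumes t: "0 < t" "t \<le> 2 * s" and m: "m \<noteq> 0"
  shows "\<exists>K\<ge>0. \<forall>\<Phi>. \<Phi> \<in> borel_measurable M \<longrightarrow> aeq \<Omega> (Ginv \<Omega> G \<Phi>) (\<lambda>x. m * \<Phi> x) \<longrightarrow>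
     (AE x in M. ennreal \<bar>\<Phi> x\<bar> \<le> ennreal K * (\<integral>\<^sup>+y. kp (real DIM('a) - t) x y * ennreal \<bar>\<Phi> y\<bar> \<partial>M))"
proof -
  define c' where "c' = c1 * R powr (2 * s - t)"
  have c'0: "c' \<ge> 0" unfolding c'_def using c1_pos by simp
  define K where "K = 1 / \<bar>m\<bar> * c'"
  show ?thesis
  proof (intro exI[of _ K] conjI allI impI)
    show "K \<ge> 0" unfolding K_def using c'0 by simp
    fix \<Phi>
    assume Phim[measurable]: "\<Phi> \<in> borel_measurable M"
      and eig: "aeq \<Omega> (Ginv \<Omega> G \<Phi>) (\<lambda>x. m * \<Phi> x)"
    have g: "AE z in M. ennreal \<bar>\<Phi> z\<bar> \<le> ennreal \<bar>\<Phi> z\<bar>" by simp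
    from STEP[OF eig g] AE_space
    show "AE x in M. ennreal \<bar>\<Phi> x\<bar> \<le> ennreal K * (\<integral>\<^sup>+y. kp (real DIM('a) - t) x y * ennreal \<bar>\<Phi> y\<bar> \<partial>M)"
    proof (elim AE_mp, intro AE_I2 impI)
      fix x assume H: "ennreal (\<bar>m\<bar> * \<bar>\<Phi> x\<bar>) \<le> (\<integral>\<^sup>+z. ennreal (Kb x z) * ennreal \<bar>\<Phi> z\<bar> \<partial>M)"
        and x: "x \<in> space M"
      have "(\<integral>\<^sup>+z. ennreal (Kb x z) * ennreal \<bar>\<Phi> z\<bar> \<partial>M) \<le> (\<integral>\<^sup>+z. ennreal c' * (kp (real DIM('a) - t) x z * ennreal \<bar>\<Phi> z\<bar>) \<partial>M)"
        unfolding c'_def mult.assoc[symmetric] using x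
        by (intro nn_integral_mono mult_right_mono Kb_le_kp t) auto
      also have "\<dots> = ennreal c' * (\<integral>\<^sup>+z. kp (real DIM('a) - t) x z * ennreal \<bar>\<Phi> z\<bar> \<partial>M)"
        by (rule nn_integral_cmult) measurable
      finally have "ennreal (\<bar>m\<bar> * \<bar>\<Phi> x\<bar>) \<le> ennreal c' * (\<integral>\<^sup>+z. kp (real DIM('a) - t) x z * ennreal \<bar>\<Phi> z\<bar> \<partial>M)"
        using H by simp
      from ennreal_div_abs[OF this m]
      have X: "ennreal \<bar>\<Phi> x\<bar> \<le> ennreal (1 / \<bar>m\<bar>) * (ennreal c' * (\<integral>\<^sup>+z. kp (real DIM('a) - t) x z * ennreal \<bar>\<Phi> z\<bar> \<partial>M))"
        by simp
      have "ennreal K = ennreal (1 / \<bar>m\<bar>) * ennreal c'"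
        unfolding K_def using c'0 by (metis ennreal_mult abs_ge_zero divide_nonneg_nonneg zero_le_one)
      then show "ennreal \<bar>\<Phi> x\<bar> \<le> ennreal K * (\<integral>\<^sup>+y. kp (real DIM('a) - t) x y * ennreal \<bar>\<Phi> y\<bar> \<partial>M)"
        using X by (simp add: mult.assoc)
    qed
  qed
qed

lemma FIN:
  assumes t: "0 < t" "t \<le> 2 * s" and a: "0 \<le> a" "a < t" and m: "m \<noteq> 0"
  shows "\<exists>K\<ge>0. \<forall>\<Phi> A. \<Phi> \<in> borel_measurable M \<longrightarrow> aeq \<Omega> (Ginv \<Omega> G \<Phi>) (\<lambda>x. m * \<Phi> x) \<longrightarrow>
     (AE z in M. ennreal \<bar>\<Phi> z\<bar> \<le> A * (\<integral>\<^sup>+y. kp a z y * ennreal \<bar>\<Phi> y\<bar> \<partial>M)) \<longrightarrow>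
     (AE x in M. ennreal \<bar>\<Phi> x\<bar> \<le> A * ennreal K * (\<integral>\<^sup>+y. ennreal \<bar>\<Phi> y\<bar> \<partial>M))"
proof -
  have n2: "2 \<le> real DIM('a)" by (rule nn_ge2)
  obtain C where C: "C \<ge> 0" "\<And>x y. x \<in> \<Omega> \<Longrightarrow> y \<in> \<Omega> \<Longrightarrow>
     (\<integral>\<^sup>+z. kp (real DIM('a) - t) x z * kp a z y \<partial>M) \<le> ennreal C"
    using bcomp_M[of "real DIM('a) - t" a] t a n2 s_le by auto
  define c' where "c' = c1 * R powr (2 * s - t)"
  have c'0: "c' \<ge> 0" unfolding c'_def using c1_pos by simp
  define K where "K = 1 / \<bar>m\<bar> * (c' * C)"
  show ?thesis
  proof (intro exI[of _ K] conjI allI impI)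
    show "K \<ge> 0" unfolding K_def using c'0 C by simp
    fix \<Phi> A
    assume Phim[measurable]: "\<Phi> \<in> borel_measurable M"
      and eig: "aeq \<Omega> (Ginv \<Omega> G \<Phi>) (\<lambda>x. m * \<Phi> x)"
      and bnd: "AE z in M. ennreal \<bar>\<Phi> z\<bar> \<le> A * (\<integral>\<^sup>+y. kp a z y * ennreal \<bar>\<Phi> y\<bar> \<partial>M)"
    define I where "I z = (\<integral>\<^sup>+y. kp a z y * ennreal \<bar>\<Phi> y\<bar> \<partial>M)" for z
    have Im[measurable]: "I \<in> borel_measurable M" unfolding I_def by measurable
    from STEP[OF eig bnd[folded I_def]] AE_space
    show "AE x in M. ennreal \<bar>\<Phi> x\<bar> \<le> A * ennreal K * (\<integral>\<^sup>+y. ennreal \<bar>\<Phi> y\<bar> \<partial>M)"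
    proof (elim AE_mp, intro AE_I2 impI)
      fix x assume H: "ennreal (\<bar>m\<bar> * \<bar>\<Phi> x\<bar>) \<le> (\<integral>\<^sup>+z. ennreal (Kb x z) * (A * I z) \<partial>M)"
        and x: "x \<in> space M"
      have "(\<integral>\<^sup>+z. ennreal (Kb x z) * (A * I z) \<partial>M) \<le> (\<integral>\<^sup>+z. ennreal c' * kp (real DIM('a) - t) x z * (A * I z) \<partial>M)"
        unfolding c'_def using x
        by (intro nn_integral_mono mult_right_mono Kb_le_kp t) auto
      also have "\<dots> = (\<integral>\<^sup>+z. (ennreal c' * A) * (kp (real DIM('a) - t) x z * I z) \<partial>M)"
        by (intro nn_integral_cong) (simp add: ac_simps)
      also have "\<dots> = ennreal c' * A * (\<integral>\<^sup>+z. kp (real DIM('a) - t) x z * I z \<partial>M)"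
        by (rule nn_integral_cmult) measurable
      also have "(\<integral>\<^sup>+z. kp (real DIM('a) - t) x z * I z \<partial>M)
          = (\<integral>\<^sup>+y. (\<integral>\<^sup>+z. kp (real DIM('a) - t) x z * kp a z y \<partial>M) * ennreal \<bar>\<Phi> y\<bar> \<partial>M)"
        unfolding I_def by (rule swap_int[OF Phim])
      also have "\<dots> \<le> (\<integral>\<^sup>+y. ennreal C * ennreal \<bar>\<Phi> y\<bar> \<partial>M)"
        using x by (intro nn_integral_mono mult_right_mono C(2)) auto
      also have "\<dots> = ennreal C * (\<integral>\<^sup>+y. ennreal \<bar>\<Phi> y\<bar> \<partial>M)"
        by (rule nn_integral_cmult) measurable
      finally have "ennreal (\<bar>m\<bar> * \<bar>\<Phi> x\<bar>) \<le> ennreal c' * A * (ennreal C * (\<integral>\<^sup>+y. ennreal \<bar>\<Phi> y\<bar> \<partial>M))"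
        using H by (simp add: mult_left_mono)
      from ennreal_div_abs[OF this m]
      have "ennreal \<bar>\<Phi> x\<bar> \<le> ennreal (1 / \<bar>m\<bar>) * (ennreal c' * A * (ennreal C * (\<integral>\<^sup>+y. ennreal \<bar>\<Phi> y\<bar> \<partial>M)))"
        by simp
      also have "\<dots> = A * ennreal K * (\<integral>\<^sup>+y. ennreal \<bar>\<Phi> y\<bar> \<partial>M)"
      proof -
        have "ennreal K = ennreal (1 / \<bar>m\<bar>) * (ennreal c' * ennreal C)"
          unfolding K_def using c'0 C
          by (metis ennreal_mult abs_ge_zero divide_nonneg_nonneg zero_le_one mult_nonneg_nonneg)
        then show ?thesis by (simp add: ac_simps)
      qed
      finally show "ennreal \<bar>\<Phi> x\<bar> \<le> A * ennreal K * (\<integral>\<^sup>+y. ennreal \<bar>\<Phi> y\<bar> \<partial>M)" .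
    qed
  qed
qed

lemma L1_bound:
  assumes "L2fun \<Omega> \<Phi>" "(\<integral>x. (\<Phi> x)\<^sup>2 \<partial>M) = 1"
  shows "(\<integral>\<^sup>+y. ennreal \<bar>\<Phi> y\<bar> \<partial>M) \<le> ennreal ((measure M \<Omega> + 1) / 2)"
proof -
  have Pm[measurable]: "\<Phi> \<in> borel_measurable M" and Pi: "integrable M (\<lambda>x. (\<Phi> x)\<^sup>2)"
    using assms(1) by (auto simp: L2fun_def)
  have "(\<integral>\<^sup>+y. ennreal \<bar>\<Phi> y\<bar> \<partial>M) \<le> (\<integral>\<^sup>+y. ennreal ((1 + (\<Phi> y)\<^sup>2) / 2) \<partial>M)"
  proof (intro nn_integral_mono ennreal_leI)
    fix y
    have "0 \<le> (\<bar>\<Phi> y\<bar> - 1)\<^sup>2" by simp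
    then show "\<bar>\<Phi> y\<bar> \<le> (1 + (\<Phi> y)\<^sup>2) / 2" by (simp add: power2_eq_square algebra_simps abs_mult_self_eq)
  qed
  also have "\<dots> = ennreal (\<integral>y. (1 + (\<Phi> y)\<^sup>2) / 2 \<partial>M)"
    by (rule nn_integral_eq_integral)
      (use Pi in \<open>auto intro!: integrable_divide Bochner_Integration.integrable_add finite_measure.integrable_const[OF finM]\<close>)
  also have "(\<integral>y. (1 + (\<Phi> y)\<^sup>2) / 2 \<partial>M) = (measure M \<Omega> + 1) / 2"
  proof -
    have "(\<integral>y. 1 + (\<Phi> y)\<^sup>2 \<partial>M) = (\<integral>y. 1 \<partial>M) + (\<integral>y. (\<Phi> y)\<^sup>2 \<partial>M)"
      by (rule Bochner_Integration.integral_add) (use Pi finite_measure.integrable_const[OF finM] in auto)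
    then show ?thesis using assms(2) by simp
  qed
  finally show ?thesis .
qed

end

context eigset begin

lemma LINF:
  assumes m: "m \<noteq> 0"
  shows "\<exists>B\<ge>0. \<forall>\<Phi>. L2fun \<Omega> \<Phi> \<longrightarrow> aeq \<Omega> (Ginv \<Omega> G \<Phi>) (\<lambda>x. m * \<Phi> x) \<longrightarrow>
     (\<integral>x. (\<Phi> x)\<^sup>2 \<partial>M) = 1 \<longrightarrow> (AE x in M. \<bar>\<Phi> x\<bar> \<le> B)"
proof -
  define n where "n = real DIM('a)"
  have n2: "2 \<le> n" unfolding n_def by (rule nn_ge2)
  define k where "k = nat \<lceil>n / (2 * s)\<rceil>"
  have kge: "n / (2 * s) \<le> real k" unfolding k_def by linarith
  have k1: "k \<ge> 1"
  proof -
    have "0 < n / (2 * s)" using n2 s_pos by simp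
    then show ?thesis using kge by linarith
  qed
  define t where "t = n / (real k + 1/2)"
  have t0: "0 < t" unfolding t_def using n2 by simp
  have t2s: "t \<le> 2 * s"
  proof -
    have "n \<le> 2 * s * real k" using kge s_pos by (simp add: field_simps)
    also have "\<dots> \<le> 2 * s * (real k + 1/2)" using s_pos by simp
    finally show ?thesis unfolding t_def using s_pos by (simp add: field_simps)
  qed
  have tk: "n - real k * t = t / 2" unfolding t_def by (simp add: field_simps)
  have claim: "1 \<le> j \<Longrightarrow> j \<le> k \<Longrightarrow> \<exists>A\<ge>0. \<forall>\<Phi>. \<Phi> \<in> borel_measurable M \<longrightarrow> aeq \<Omega> (Ginv \<Omega> G \<Phi>) (\<lambda>x. m * \<Phi> x) \<longrightarrow>
     (AE x in M. ennreal \<bar>\<Phi> x\<bar> \<le> ennreal A * (\<integral>\<^sup>+y. kp (n - real j * t) x y * ennreal \<bar>\<Phi> y\<bar> \<partial>M))" for j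
  proof (induction j)
    case 0 then show ?case by simp
  next
    case (Suc j)
    show ?case
    proof (cases "j = 0")
      case True
      then show ?thesis using BASE[OF t0 t2s m] unfolding n_def by simp
    next
      case False
      then have j1: "1 \<le> j" by simp
      from Suc.IH[OF j1] Suc.prems obtain A where A: "A \<ge> 0" "\<And>\<Phi>. \<Phi> \<in> borel_measurable M \<Longrightarrow> aeq \<Omega> (Ginv \<Omega> G \<Phi>) (\<lambda>x. m * \<Phi> x) \<Longrightarrow>
         (AE x in M. ennreal \<bar>\<Phi> x\<bar> \<le> ennreal A * (\<integral>\<^sup>+y. kp (n - real j * t) x y * ennreal \<bar>\<Phi> y\<bar> \<partial>M))"
        by auto
      have a1: "t < n - real j * t"
      proof -
        have "real (Suc j) < real k + 1/2" using Suc.prems by simp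
        hence "real (Suc j) * t < (real k + 1/2) * t" using t0 by (intro mult_strict_right_mono) auto
        also have "(real k + 1/2) * t = n" unfolding t_def by simp
        finally show ?thesis by (simp add: algebra_simps)
      qed
      have a2: "n - real j * t < real DIM('a)" using j1 t0 unfolding n_def by simp
      obtain K where K: "K \<ge> 0" "\<And>\<Phi> A. \<Phi> \<in> borel_measurable M \<Longrightarrow> aeq \<Omega> (Ginv \<Omega> G \<Phi>) (\<lambda>x. m * \<Phi> x) \<Longrightarrow>
         (AE z in M. ennreal \<bar>\<Phi> z\<bar> \<le> A * (\<integral>\<^sup>+y. kp (n - real j * t) z y * ennreal \<bar>\<Phi> y\<bar> \<partial>M)) \<Longrightarrow>
         (AE x in M. ennreal \<bar>\<Phi> x\<bar> \<le> A * ennreal K * (\<integral>\<^sup>+y. kp (n - real j * t - t) x y * ennreal \<bar>\<Phi> y\<bar> \<partial>M))"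
        using ITER[OF t0 t2s a1 a2 m] by blast
      have e: "n - real j * t - t = n - real (Suc j) * t" by (simp add: algebra_simps)
      show ?thesis
      proof (intro exI[of _ "A * K"] conjI allI impI)
        show "0 \<le> A * K" using A K by simp
        fix \<Phi> assume P: "\<Phi> \<in> borel_measurable M" "aeq \<Omega> (Ginv \<Omega> G \<Phi>) (\<lambda>x. m * \<Phi> x)"
        from K(2)[OF P A(2)[OF P]]
        show "AE x in M. ennreal \<bar>\<Phi> x\<bar> \<le> ennreal (A * K) * (\<integral>\<^sup>+y. kp (n - real (Suc j) * t) x y * ennreal \<bar>\<Phi> y\<bar> \<partial>M)"
          unfolding e using A K by (simp add: ennreal_mult)
      qed
    qed
  qed
  from claim[OF k1 order_refl] obtain A where A: "A \<ge> 0" "\<And>\<Phi>. \<Phi> \<in> borel_measurable M \<Longrightarrow> aeq \<Omega> (Ginv \<Omega> G \<Phi>) (\<lambda>x. m * \<Phi> x) \<Longrightarrow>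
     (AE x in M. ennreal \<bar>\<Phi> x\<bar> \<le> ennreal A * (\<integral>\<^sup>+y. kp (t / 2) x y * ennreal \<bar>\<Phi> y\<bar> \<partial>M))"
    unfolding tk by blast
  obtain K where K: "K \<ge> 0" "\<And>\<Phi> A. \<Phi> \<in> borel_measurable M \<Longrightarrow> aeq \<Omega> (Ginv \<Omega> G \<Phi>) (\<lambda>x. m * \<Phi> x) \<Longrightarrow>
     (AE z in M. ennreal \<bar>\<Phi> z\<bar> \<le> A * (\<integral>\<^sup>+y. kp (t / 2) z y * ennreal \<bar>\<Phi> y\<bar> \<partial>M)) \<Longrightarrow>
     (AE x in M. ennreal \<bar>\<Phi> x\<bar> \<le> A * ennreal K * (\<integral>\<^sup>+y. ennreal \<bar>\<Phi> y\<bar> \<partial>M))"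
    using FIN[OF t0 t2s _ _ m, of "t / 2"] t0 by auto
  define W where "W = (measure M \<Omega> + 1) / 2"
  have W0: "W \<ge> 0" unfolding W_def by simp
  show ?thesis
  proof (intro exI[of _ "A * K * W"] conjI allI impI)
    show "0 \<le> A * K * W" using A K W0 by simp
    fix \<Phi> assume P: "L2fun \<Omega> \<Phi>" "aeq \<Omega> (Ginv \<Omega> G \<Phi>) (\<lambda>x. m * \<Phi> x)" "(\<integral>x. (\<Phi> x)\<^sup>2 \<partial>M) = 1"
    have Pm: "\<Phi> \<in> borel_measurable M" using P(1) by (simp add: L2fun_def)
    have L1: "(\<integral>\<^sup>+y. ennreal \<bar>\<Phi> y\<bar> \<partial>M) \<le> ennreal W" unfolding W_def by (rule L1_bound[OF P(1) P(3)])
    from K(2)[OF Pm P(2) A(2)[OF Pm P(2)]]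
    show "AE x in M. \<bar>\<Phi> x\<bar> \<le> A * K * W"
    proof (elim AE_mp, intro AE_I2 impI)
      fix x assume "ennreal \<bar>\<Phi> x\<bar> \<le> ennreal A * ennreal K * (\<integral>\<^sup>+y. ennreal \<bar>\<Phi> y\<bar> \<partial>M)"
      also have "\<dots> \<le> ennreal A * ennreal K * ennreal W" by (rule mult_left_mono[OF L1]) simp
      also have "\<dots> = ennreal (A * K * W)" using A K W0 by (simp add: ennreal_mult)
      finally show "\<bar>\<Phi> x\<bar> \<le> A * K * W" using A K W0 by (simp add: ennreal_le_iff)
    qed
  qed
qed

end

context eigset begin

lemma Kb_far:
  assumes x: "x \<in> \<Omega>" and z: "z \<in> \<Omega>" and far: "dd x / 2 \<le> norm (x - z)"
    and \<beta>: "0 \<le> \<beta>" "\<beta> \<le> \<beta>'" "\<beta>' \<le> \<gamma>" "\<beta>' \<le> \<beta> + s"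
  shows "Kb x z * dd z powr \<beta> \<le> c1 * 3 powr \<beta> * dd x powr \<beta>' * R powr (s - \<beta>' + \<beta>) * norm (x - z) powr (-(real DIM('a) - s))"
proof -
  define r where "r = norm (x - z)"
  define dx where "dx = dd x"
  have dx: "0 < dx" "dx \<le> R" using dd_pos[OF x] dd_le_R[OF x] by (auto simp: dx_def)
  have r: "0 < r" "r < R" "dx \<le> 2 * r" using far dx dist_lt_R[OF x z] by (auto simp: r_def dx_def)
  define \<theta> where "\<theta> = \<beta>' / \<gamma>"
  have \<theta>: "0 \<le> \<theta>" "\<theta> \<le> 1" "\<gamma> * \<theta> = \<beta>'" using \<beta> g_pos by (auto simp: \<theta>_def field_simps)
  have m1: "min (dx powr \<gamma> / r powr \<gamma>) 1 \<le> (dx powr \<gamma> / r powr \<gamma>) powr \<theta>"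
    by (rule min_le_powr) (use \<theta> in auto)
  also have "(dx powr \<gamma> / r powr \<gamma>) powr \<theta> = dx powr \<beta>' * r powr (-\<beta>')"
  proof -
    have "(dx powr \<gamma> / r powr \<gamma>) powr \<theta> = (dx powr \<gamma>) powr \<theta> / (r powr \<gamma>) powr \<theta>" by (rule powr_divide)
    also have "\<dots> = dx powr \<beta>' / r powr \<beta>'" by (simp add: powr_powr \<theta>(3))
    also have "\<dots> = dx powr \<beta>' * r powr (-\<beta>')" by (simp add: powr_minus divide_inverse)
    finally show ?thesis .
  qed
  finally have m2: "min (dx powr \<gamma> / r powr \<gamma>) 1 \<le> dx powr \<beta>' * r powr (-\<beta>')" .
  have dz: "dd z \<le> 3 * r" using dd_lip[of z x] r unfolding r_def[symmetric] dx_def[symmetric] by linarith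
  have dz0: "0 \<le> dd z" by (simp add: infdist_nonneg)
  have dzb: "dd z powr \<beta> \<le> (3 * r) powr \<beta>" using dz dz0 \<beta> by (intro powr_mono2) auto
  also have "(3 * r) powr \<beta> = 3 powr \<beta> * r powr \<beta>" using r by (simp add: powr_mult)
  finally have dzb: "dd z powr \<beta> \<le> 3 powr \<beta> * r powr \<beta>" .
  have "Kb x z * dd z powr \<beta> \<le> (c1 * r powr (-(real DIM('a) - 2 * s)) * (dx powr \<beta>' * r powr (-\<beta>'))) * (3 powr \<beta> * r powr \<beta>)"
    unfolding Kb_def r_def[symmetric] dx_def[symmetric] using c1_pos
    by (intro mult_mono m2 dzb mult_left_mono) auto
  also have "\<dots> = c1 * 3 powr \<beta> * dx powr \<beta>' * (r powr (s - \<beta>' + \<beta>) * r powr (-(real DIM('a) - s)))"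
  proof -
    have "r powr (-(real DIM('a) - 2 * s)) * r powr (-\<beta>') * r powr \<beta> = r powr (s - \<beta>' + \<beta>) * r powr (-(real DIM('a) - s))"
      by (simp add: powr_add[symmetric] algebra_simps)
    then show ?thesis by (simp add: algebra_simps)
  qed
  also have "\<dots> \<le> c1 * 3 powr \<beta> * dx powr \<beta>' * (R powr (s - \<beta>' + \<beta>) * r powr (-(real DIM('a) - s)))"
    using c1_pos r \<beta> by (intro mult_left_mono mult_right_mono powr_mono2) auto
  finally show ?thesis unfolding r_def dx_def by (simp add: algebra_simps)
qed

lemma Kb_near:
  assumes x: "x \<in> \<Omega>" and near: "norm (x - z) < dd x / 2" and \<beta>: "0 \<le> \<beta>"
  shows "Kb x z * dd z powr \<beta> \<le> c1 * (2 * dd x) powr \<beta> * norm (x - z) powr (-(real DIM('a) - 2 * s))"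
proof -
  define r where "r = norm (x - z)"
  have dz: "dd z \<le> 2 * dd x" using dd_lip[of z x] near infdist_nonneg[of x "frontier \<Omega>"] unfolding r_def[symmetric] by linarith
  have dz0: "0 \<le> dd z" by (simp add: infdist_nonneg)
  have dzb: "dd z powr \<beta> \<le> (2 * dd x) powr \<beta>" using dz dz0 \<beta> by (intro powr_mono2) auto
  have "Kb x z \<le> c1 * r powr (-(real DIM('a) - 2 * s))"
    unfolding Kb_def r_def[symmetric] using c1_pos by (intro mult_left_le) auto
  then have "Kb x z * dd z powr \<beta> \<le> c1 * r powr (-(real DIM('a) - 2 * s)) * (2 * dd x) powr \<beta>"
    using dzb Kb_nonneg c1_pos by (intro mult_mono) auto
  then show ?thesis unfolding r_def by (simp add: algebra_simps)
qed

lemma near_real: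
  assumes dx: "0 < dx" "dx \<le> R" and \<beta>: "0 \<le> \<beta>" "\<beta>' \<le> \<beta> + s"
  shows "(2 * dx) powr \<beta> * (dx / 2) powr (2 * s) \<le> 2 powr \<beta> * R powr (\<beta> + 2 * s - \<beta>') * dx powr \<beta>'"
proof -
  have "(2 * dx) powr \<beta> = 2 powr \<beta> * dx powr \<beta>" using dx by (simp add: powr_mult)
  moreover have "(dx / 2) powr (2 * s) \<le> dx powr (2 * s)" using dx s_pos by (intro powr_mono2) auto
  moreover have "dx powr \<beta> * dx powr (2 * s) = dx powr (\<beta> + 2 * s - \<beta>') * dx powr \<beta>'"
    by (simp add: powr_add[symmetric])
  moreover have "dx powr (\<beta> + 2 * s - \<beta>') \<le> R powr (\<beta> + 2 * s - \<beta>')"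
    using dx \<beta> s_pos by (intro powr_mono2) auto
  ultimately show ?thesis
  proof -
    assume e1: "(2 * dx) powr \<beta> = 2 powr \<beta> * dx powr \<beta>"
      and e2: "(dx / 2) powr (2 * s) \<le> dx powr (2 * s)"
      and e3: "dx powr \<beta> * dx powr (2 * s) = dx powr (\<beta> + 2 * s - \<beta>') * dx powr \<beta>'"
      and e4: "dx powr (\<beta> + 2 * s - \<beta>') \<le> R powr (\<beta> + 2 * s - \<beta>')"
    have "(2 * dx) powr \<beta> * (dx / 2) powr (2 * s) \<le> 2 powr \<beta> * dx powr \<beta> * dx powr (2 * s)"
      unfolding e1 mult.assoc by (intro mult_left_mono e2) auto
    also have "\<dots> = 2 powr \<beta> * (dx powr (\<beta> + 2 * s - \<beta>') * dx powr \<beta>')" by (simp only: mult.assoc e3)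
    also have "\<dots> \<le> 2 powr \<beta> * (R powr (\<beta> + 2 * s - \<beta>') * dx powr \<beta>')"
      by (intro mult_left_mono mult_right_mono e4) auto
    finally show ?thesis by (simp add: mult.assoc)
  qed
qed

lemma BDRY:
  assumes \<beta>: "0 \<le> \<beta>" "\<beta> \<le> \<gamma>"
  shows "\<exists>C\<ge>0. \<forall>x\<in>\<Omega>. (\<integral>\<^sup>+z. ennreal (Kb x z) * ennreal (dd z powr \<beta>) \<partial>M) \<le> ennreal (C * dd x powr (min \<gamma> (\<beta> + s)))"
proof -
  define \<beta>' where "\<beta>' = min \<gamma> (\<beta> + s)"
  have \<beta>': "\<beta> \<le> \<beta>'" "\<beta>' \<le> \<gamma>" "\<beta>' \<le> \<beta> + s" using \<beta> s_pos by (auto simp: \<beta>'_def)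
  define n where "n = real DIM('a)"
  have n2: "2 \<le> n" unfolding n_def by (rule nn_ge2)
  obtain Ci where Ci: "Ci \<ge> 0" "\<And>y::'a. \<And>\<rho>. \<rho> > 0 \<Longrightarrow>
     (\<integral>\<^sup>+z. indicator (ball y \<rho>) z * ennreal (norm (z - y) powr (-(n - 2 * s))) \<partial>lborel) \<le> ennreal (Ci * \<rho> powr (2 * s))"
    using radial_inner[of "n - 2 * s", where 'a='a] n2 s_le s_pos unfolding n_def by auto
  obtain Co where Co: "Co \<ge> 0" "\<And>y::'a. \<And>\<rho>. \<rho> > 0 \<Longrightarrow>
     (\<integral>\<^sup>+z. indicator (ball y \<rho>) z * ennreal (norm (z - y) powr (-(n - s))) \<partial>lborel) \<le> ennreal (Co * \<rho> powr s)"
    using radial_inner[of "n - s", where 'a='a] n2 s_le s_pos unfolding n_def by auto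
  define C where "C = c1 * Ci * (2 powr \<beta> * R powr (\<beta> + 2 * s - \<beta>')) + c1 * 3 powr \<beta> * R powr (s - \<beta>' + \<beta>) * (Co * R powr s)"
  have C0: "C \<ge> 0" unfolding C_def using c1_pos Ci Co by simp
  show ?thesis unfolding \<beta>'_def[symmetric]
  proof (intro exI[of _ C] conjI ballI C0)
    fix x assume x: "x \<in> \<Omega>"
    define dx where "dx = dd x"
    have dx: "0 < dx" "dx \<le> R" using dd_pos[OF x] dd_le_R[OF x] by (auto simp: dx_def)
    define \<rho> where "\<rho> = dx / 2"
    have \<rho>: "\<rho> > 0" using dx by (simp add: \<rho>_def)
    define a1 where "a1 = c1 * (2 * dx) powr \<beta>"
    define a2 where "a2 = c1 * 3 powr \<beta> * dx powr \<beta>' * R powr (s - \<beta>' + \<beta>)"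
    have a1: "a1 \<ge> 0" and a2: "a2 \<ge> 0" using c1_pos by (auto simp: a1_def a2_def)
    define f1 where "f1 z = indicator (ball x \<rho>) z * ennreal (norm (z - x) powr (-(n - 2 * s)))" for z
    define f2 where "f2 z = indicator (ball x R) z * ennreal (norm (z - x) powr (-(n - s)))" for z
    have pt: "ennreal (Kb x z) * ennreal (dd z powr \<beta>) \<le> ennreal a1 * f1 z + ennreal a2 * f2 z" if z: "z \<in> \<Omega>" for z
    proof (cases "norm (x - z) < \<rho>")
      case True
      have "Kb x z * dd z powr \<beta> \<le> a1 * norm (z - x) powr (-(n - 2 * s))"
        using Kb_near[OF x _ \<beta>(1), of z] True unfolding a1_def \<rho>_def dx_def n_def
        by (simp add: norm_minus_commute)
      then have "ennreal (Kb x z) * ennreal (dd z powr \<beta>) \<le> ennreal a1 * f1 z"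
        unfolding f1_def using True a1 Kb_nonneg
        by (simp add: ennreal_mult[symmetric] dist_norm ennreal_leI)
      then show ?thesis by (rule order_trans) simp
    next
      case False
      have "Kb x z * dd z powr \<beta> \<le> a2 * norm (z - x) powr (-(n - s))"
        using Kb_far[OF x z _ \<beta>(1) \<beta>'] False unfolding a2_def \<rho>_def dx_def n_def
        by (simp add: norm_minus_commute)
      moreover have "z \<in> ball x R" using dist_lt_R[OF x z] by (simp add: dist_norm)
      ultimately have "ennreal (Kb x z) * ennreal (dd z powr \<beta>) \<le> ennreal a2 * f2 z"
        unfolding f2_def using a2 Kb_nonneg
        by (simp add: ennreal_mult[symmetric] ennreal_leI)
      then show ?thesis by (rule order_trans) simp
    qed
    have f1m: "f1 \<in> borel_measurable lborel" unfolding f1_def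
      by (intro borel_measurable_times_ennreal borel_measurable_indicator) (auto simp: borel_open)
    have f2m: "f2 \<in> borel_measurable lborel" unfolding f2_def
      by (intro borel_measurable_times_ennreal borel_measurable_indicator) (auto simp: borel_open)
    have "(\<integral>\<^sup>+z. ennreal (Kb x z) * ennreal (dd z powr \<beta>) \<partial>M) \<le> (\<integral>\<^sup>+z. ennreal a1 * f1 z + ennreal a2 * f2 z \<partial>M)"
      by (intro nn_integral_mono pt) simp
    also have "\<dots> \<le> (\<integral>\<^sup>+z. ennreal a1 * f1 z + ennreal a2 * f2 z \<partial>lborel)" by (rule nn_M_le)
    also have "\<dots> = ennreal a1 * integral\<^sup>N lborel f1 + ennreal a2 * integral\<^sup>N lborel f2"
      using f1m f2m by (simp add: nn_integral_add nn_integral_cmult)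
    also have "\<dots> \<le> ennreal a1 * ennreal (Ci * \<rho> powr (2 * s)) + ennreal a2 * ennreal (Co * R powr s)"
      unfolding f1_def f2_def by (intro add_mono mult_left_mono Ci(2) Co(2) \<rho> R_pos) auto
    also have "\<dots> = ennreal (a1 * (Ci * \<rho> powr (2 * s)) + a2 * (Co * R powr s))"
      using a1 a2 Ci Co by (simp add: ennreal_mult ennreal_plus)
    also have "\<dots> \<le> ennreal (C * dx powr \<beta>')"
    proof (rule ennreal_leI)
      have "a1 * (Ci * \<rho> powr (2 * s)) = c1 * Ci * ((2 * dx) powr \<beta> * (dx / 2) powr (2 * s))"
        unfolding a1_def \<rho>_def by (simp add: algebra_simps)
      also have "\<dots> \<le> c1 * Ci * (2 powr \<beta> * R powr (\<beta> + 2 * s - \<beta>') * dx powr \<beta>')"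
        using c1_pos Ci by (intro mult_left_mono near_real dx \<beta>(1) \<beta>'(3)) auto
      finally have t1: "a1 * (Ci * \<rho> powr (2 * s)) \<le> c1 * Ci * (2 powr \<beta> * R powr (\<beta> + 2 * s - \<beta>')) * dx powr \<beta>'"
        by (simp add: algebra_simps)
      have t2: "a2 * (Co * R powr s) = c1 * 3 powr \<beta> * R powr (s - \<beta>' + \<beta>) * (Co * R powr s) * dx powr \<beta>'"
        unfolding a2_def by (simp add: algebra_simps)
      have t3: "C * dx powr \<beta>' = c1 * Ci * (2 powr \<beta> * R powr (\<beta> + 2 * s - \<beta>')) * dx powr \<beta>'
          + c1 * 3 powr \<beta> * R powr (s - \<beta>' + \<beta>) * (Co * R powr s) * dx powr \<beta>'"
        unfolding C_def by (rule distrib_right)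
      show "a1 * (Ci * \<rho> powr (2 * s)) + a2 * (Co * R powr s) \<le> C * dx powr \<beta>'"
        using t1 t2 t3 by linarith
    qed
    finally show "(\<integral>\<^sup>+z. ennreal (Kb x z) * ennreal (dd z powr \<beta>) \<partial>M) \<le> ennreal (C * dd x powr \<beta>')"
      unfolding dx_def .
  qed
qed

end

lemma infdist_borel: "(\<lambda>z::'a::euclidean_space. infdist z A) \<in> borel_measurable borel"
  by (intro borel_measurable_continuous_onI continuous_on_infdist continuous_on_id)

lemma infdist_meas[measurable]:
  "f \<in> M \<rightarrow>\<^sub>M borel \<Longrightarrow> (\<lambda>z. infdist (f z :: 'a::euclidean_space) A) \<in> borel_measurable M"
  by (rule measurable_compose[OF _ infdist_borel])

context eigset begin

lemma BSTEP:
  assumes \<beta>: "0 \<le> \<beta>" "\<beta> \<le> \<gamma>" and m: "m \<noteq> 0"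
  shows "\<exists>K\<ge>0. \<forall>\<Phi> B. B \<ge> 0 \<longrightarrow> \<Phi> \<in> borel_measurable M \<longrightarrow> aeq \<Omega> (Ginv \<Omega> G \<Phi>) (\<lambda>x. m * \<Phi> x) \<longrightarrow>
     (AE z in M. \<bar>\<Phi> z\<bar> \<le> B * dd z powr \<beta>) \<longrightarrow>
     (AE x in M. \<bar>\<Phi> x\<bar> \<le> B * K * dd x powr (min \<gamma> (\<beta> + s)))"
proof -
  obtain C where C: "C \<ge> 0" "\<And>x. x \<in> \<Omega> \<Longrightarrow>
    (\<integral>\<^sup>+z. ennreal (Kb x z) * ennreal (dd z powr \<beta>) \<partial>M) \<le> ennreal (C * dd x powr (min \<gamma> (\<beta> + s)))"
    using BDRY[OF \<beta>] by blast
  define K where "K = 1 / \<bar>m\<bar> * C"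
  show ?thesis
  proof (intro exI[of _ K] conjI allI impI)
    show "K \<ge> 0" unfolding K_def using C by simp
    fix \<Phi> B assume B: "B \<ge> 0" and Phim[measurable]: "\<Phi> \<in> borel_measurable M"
      and eig: "aeq \<Omega> (Ginv \<Omega> G \<Phi>) (\<lambda>x. m * \<Phi> x)"
      and bnd: "AE z in M. \<bar>\<Phi> z\<bar> \<le> B * dd z powr \<beta>"
    have g: "AE z in M. ennreal \<bar>\<Phi> z\<bar> \<le> ennreal (B * dd z powr \<beta>)"
      using bnd by (elim AE_mp) (auto intro!: AE_I2 ennreal_leI)
    from STEP[OF eig g] AE_space
    show "AE x in M. \<bar>\<Phi> x\<bar> \<le> B * K * dd x powr (min \<gamma> (\<beta> + s))"
    proof (elim AE_mp, intro AE_I2 impI)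
      fix x assume H: "ennreal (\<bar>m\<bar> * \<bar>\<Phi> x\<bar>) \<le> (\<integral>\<^sup>+z. ennreal (Kb x z) * ennreal (B * dd z powr \<beta>) \<partial>M)"
        and x: "x \<in> space M"
      have "(\<integral>\<^sup>+z. ennreal (Kb x z) * ennreal (B * dd z powr \<beta>) \<partial>M)
          = (\<integral>\<^sup>+z. ennreal B * (ennreal (Kb x z) * ennreal (dd z powr \<beta>)) \<partial>M)"
        using B by (intro nn_integral_cong) (simp add: ennreal_mult ac_simps)
      also have "\<dots> = ennreal B * (\<integral>\<^sup>+z. ennreal (Kb x z) * ennreal (dd z powr \<beta>) \<partial>M)"
      proof (rule nn_integral_cmult)
        show "(\<lambda>z. ennreal (Kb x z) * ennreal (dd z powr \<beta>)) \<in> borel_measurable M"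
          unfolding Kb_def by measurable
      qed
      also have "\<dots> \<le> ennreal B * ennreal (C * dd x powr (min \<gamma> (\<beta> + s)))"
        using x by (intro mult_left_mono C(2)) auto
      also have "\<dots> = ennreal (B * (C * dd x powr (min \<gamma> (\<beta> + s))))" using B C by (simp add: ennreal_mult)
      finally have "ennreal (\<bar>m\<bar> * \<bar>\<Phi> x\<bar>) \<le> ennreal (B * (C * dd x powr (min \<gamma> (\<beta> + s))))"
        using H by simp
      then have "\<bar>m\<bar> * \<bar>\<Phi> x\<bar> \<le> B * (C * dd x powr (min \<gamma> (\<beta> + s)))"
        using B C by (simp add: ennreal_le_iff)
      then show "\<bar>\<Phi> x\<bar> \<le> B * K * dd x powr (min \<gamma> (\<beta> + s))"
        unfolding K_def using m by (simp add: field_simps)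
    qed
  qed
qed

lemma MAIN_m:
  assumes m: "m \<noteq> 0"
  shows "\<exists>\<kappa>>0. \<forall>\<Phi>. L2fun \<Omega> \<Phi> \<longrightarrow> aeq \<Omega> (Ginv \<Omega> G \<Phi>) (\<lambda>x. m * \<Phi> x) \<longrightarrow>
     (\<integral>x. (\<Phi> x)\<^sup>2 \<partial>M) = 1 \<longrightarrow> (AE x in M. \<bar>\<Phi> x\<bar> \<le> \<kappa> * dd x powr \<gamma>)"
proof -
  obtain B where B: "B \<ge> 0" "\<And>\<Phi>. L2fun \<Omega> \<Phi> \<Longrightarrow> aeq \<Omega> (Ginv \<Omega> G \<Phi>) (\<lambda>x. m * \<Phi> x) \<Longrightarrow>
     (\<integral>x. (\<Phi> x)\<^sup>2 \<partial>M) = 1 \<Longrightarrow> (AE x in M. \<bar>\<Phi> x\<bar> \<le> B)"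
    using LINF[OF m] by blast
  have claim: "\<exists>B'\<ge>0. \<forall>\<Phi>. L2fun \<Omega> \<Phi> \<longrightarrow> aeq \<Omega> (Ginv \<Omega> G \<Phi>) (\<lambda>x. m * \<Phi> x) \<longrightarrow>
     (\<integral>x. (\<Phi> x)\<^sup>2 \<partial>M) = 1 \<longrightarrow> (AE x in M. \<bar>\<Phi> x\<bar> \<le> B' * dd x powr (min \<gamma> (real j * s)))" for j
  proof (induction j)
    case 0
    show ?case
    proof (intro exI[of _ B] conjI allI impI B(1))
      fix \<Phi> assume P: "L2fun \<Omega> \<Phi>" "aeq \<Omega> (Ginv \<Omega> G \<Phi>) (\<lambda>x. m * \<Phi> x)" "(\<integral>x. (\<Phi> x)\<^sup>2 \<partial>M) = 1"
      from B(2)[OF P] AE_space show "AE x in M. \<bar>\<Phi> x\<bar> \<le> B * dd x powr (min \<gamma> (real 0 * s))"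
      proof (elim AE_mp, intro AE_I2 impI)
        fix x assume "\<bar>\<Phi> x\<bar> \<le> B" "x \<in> space M"
        then show "\<bar>\<Phi> x\<bar> \<le> B * dd x powr (min \<gamma> (real 0 * s))"
          using dd_pos[of x] g_pos by simp
      qed
    qed
  next
    case (Suc j)
    then obtain B' where B': "B' \<ge> 0" "\<And>\<Phi>. L2fun \<Omega> \<Phi> \<Longrightarrow> aeq \<Omega> (Ginv \<Omega> G \<Phi>) (\<lambda>x. m * \<Phi> x) \<Longrightarrow>
     (\<integral>x. (\<Phi> x)\<^sup>2 \<partial>M) = 1 \<Longrightarrow> (AE x in M. \<bar>\<Phi> x\<bar> \<le> B' * dd x powr (min \<gamma> (real j * s)))"
      by blast
    define \<beta> where "\<beta> = min \<gamma> (real j * s)"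
    have \<beta>: "0 \<le> \<beta>" "\<beta> \<le> \<gamma>" using g_pos s_pos by (auto simp: \<beta>_def)
    have e: "min \<gamma> (\<beta> + s) = min \<gamma> (real (Suc j) * s)"
      unfolding \<beta>_def using s_pos by (auto simp: min_def algebra_simps)
    obtain K where K: "K \<ge> 0" "\<And>\<Phi> B. B \<ge> 0 \<Longrightarrow> \<Phi> \<in> borel_measurable M \<Longrightarrow> aeq \<Omega> (Ginv \<Omega> G \<Phi>) (\<lambda>x. m * \<Phi> x) \<Longrightarrow>
     (AE z in M. \<bar>\<Phi> z\<bar> \<le> B * dd z powr \<beta>) \<Longrightarrow>
     (AE x in M. \<bar>\<Phi> x\<bar> \<le> B * K * dd x powr (min \<gamma> (\<beta> + s)))"
      using BSTEP[OF \<beta> m] by blast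
    show ?case
    proof (intro exI[of _ "B' * K"] conjI allI impI)
      show "0 \<le> B' * K" using B' K by simp
      fix \<Phi> assume P: "L2fun \<Omega> \<Phi>" "aeq \<Omega> (Ginv \<Omega> G \<Phi>) (\<lambda>x. m * \<Phi> x)" "(\<integral>x. (\<Phi> x)\<^sup>2 \<partial>M) = 1"
      have Pm: "\<Phi> \<in> borel_measurable M" using P(1) by (simp add: L2fun_def)
      from K(2)[OF B'(1) Pm P(2) B'(2)[OF P, folded \<beta>_def]]
      show "AE x in M. \<bar>\<Phi> x\<bar> \<le> B' * K * dd x powr (min \<gamma> (real (Suc j) * s))"
        unfolding e .
    qed
  qed
  define j where "j = nat \<lceil>\<gamma> / s\<rceil>"
  have "\<gamma> / s \<le> real j" unfolding j_def by linarith
  then have "\<gamma> \<le> real j * s" using s_pos by (simp add: field_simps)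
  then have ej: "min \<gamma> (real j * s) = \<gamma>" by simp
  obtain B' where B': "B' \<ge> 0" "\<And>\<Phi>. L2fun \<Omega> \<Phi> \<Longrightarrow> aeq \<Omega> (Ginv \<Omega> G \<Phi>) (\<lambda>x. m * \<Phi> x) \<Longrightarrow>
     (\<integral>x. (\<Phi> x)\<^sup>2 \<partial>M) = 1 \<Longrightarrow> (AE x in M. \<bar>\<Phi> x\<bar> \<le> B' * dd x powr \<gamma>)"
    using claim[of j] unfolding ej by blast
  show ?thesis
  proof (intro exI[of _ "B' + 1"] conjI allI impI)
    show "0 < B' + 1" using B' by simp
    fix \<Phi> assume P: "L2fun \<Omega> \<Phi>" "aeq \<Omega> (Ginv \<Omega> G \<Phi>) (\<lambda>x. m * \<Phi> x)" "(\<integral>x. (\<Phi> x)\<^sup>2 \<partial>M) = 1"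
    from B'(2)[OF P] show "AE x in M. \<bar>\<Phi> x\<bar> \<le> (B' + 1) * dd x powr \<gamma>"
    proof (elim AE_mp, intro AE_I2 impI)
      fix x assume "\<bar>\<Phi> x\<bar> \<le> B' * dd x powr \<gamma>"
      moreover have "B' * dd x powr \<gamma> \<le> (B' + 1) * dd x powr \<gamma>" by (intro mult_right_mono) auto
      ultimately show "\<bar>\<Phi> x\<bar> \<le> (B' + 1) * dd x powr \<gamma>" by linarith
    qed
  qed
qed

end

context eigset begin

lemma L2_prod_int:
  assumes "L2fun \<Omega> f" "L2fun \<Omega> g"
  shows "integrable M (\<lambda>x. f x * g x)"
proof (rule Bochner_Integration.integrable_bound)
  have [measurable]: "f \<in> borel_measurable M" "g \<in> borel_measurable M"
    and i: "integrable M (\<lambda>x. (f x)\<^sup>2)" "integrable M (\<lambda>x. (g x)\<^sup>2)"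
    using assms by (auto simp: L2fun_def)
  show "integrable M (\<lambda>x. (f x)\<^sup>2 + (g x)\<^sup>2)" using i by auto
  show "(\<lambda>x. f x * g x) \<in> borel_measurable M" by measurable
  show "AE x in M. norm (f x * g x) \<le> norm ((f x)\<^sup>2 + (g x)\<^sup>2)"
  proof (intro AE_I2)
    fix x
    have "0 \<le> (\<bar>f x\<bar> - \<bar>g x\<bar>)\<^sup>2" by simp
    also have "(\<bar>f x\<bar> - \<bar>g x\<bar>)\<^sup>2 = (f x)\<^sup>2 - 2 * (\<bar>f x\<bar> * \<bar>g x\<bar>) + (g x)\<^sup>2"
      by (simp add: power2_diff)
    finally have "\<bar>f x\<bar> * \<bar>g x\<bar> \<le> (f x)\<^sup>2 + (g x)\<^sup>2"
      using mult_nonneg_nonneg[OF abs_ge_zero[of "f x"] abs_ge_zero[of "g x"]] by linarith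
    then show "norm (f x * g x) \<le> norm ((f x)\<^sup>2 + (g x)\<^sup>2)" by (simp add: abs_mult)
  qed
qed

lemma L2_add:
  assumes "L2fun \<Omega> f" "L2fun \<Omega> g"
  shows "L2fun \<Omega> (\<lambda>x. f x + g x)"
proof -
  have [measurable]: "f \<in> borel_measurable M" "g \<in> borel_measurable M"
    and i: "integrable M (\<lambda>x. (f x)\<^sup>2)" "integrable M (\<lambda>x. (g x)\<^sup>2)"
    using assms by (auto simp: L2fun_def)
  have "integrable M (\<lambda>x. (f x)\<^sup>2 + 2 * (f x * g x) + (g x)\<^sup>2)"
    using i L2_prod_int[OF assms] by auto
  moreover have "(\<lambda>x. (f x + g x)\<^sup>2) = (\<lambda>x. (f x)\<^sup>2 + 2 * (f x * g x) + (g x)\<^sup>2)"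
    by (rule ext) (simp add: power2_sum)
  ultimately show ?thesis unfolding L2fun_def by (auto intro: borel_measurable_add)
qed

lemma L2_scale:
  assumes "L2fun \<Omega> f"
  shows "L2fun \<Omega> (\<lambda>x. c * f x)"
  using assms unfolding L2fun_def by (auto simp: power_mult_distrib intro: borel_measurable_times)

lemma L2_zero: "L2fun \<Omega> (\<lambda>x. 0)"
  unfolding L2fun_def by simp

lemma L2_sum:
  assumes "finite A" "\<And>j. j \<in> A \<Longrightarrow> L2fun \<Omega> (\<Phi> j)"
  shows "L2fun \<Omega> (\<lambda>x. \<Sum>j\<in>A. c j * \<Phi> j x)"
  using assms
proof (induction A rule: finite_induct)
  case empty then show ?case by (simp add: L2_zero)
next
  case (insert a A)
  have "L2fun \<Omega> (\<lambda>x. c a * \<Phi> a x + (\<Sum>j\<in>A. c j * \<Phi> j x))"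
    using insert by (intro L2_add L2_scale) auto
  then show ?case using insert by simp
qed

lemma L1_fin:
  assumes "L2fun \<Omega> \<phi>"
  shows "(\<integral>\<^sup>+y. ennreal \<bar>\<phi> y\<bar> \<partial>M) < \<infinity>"
proof -
  have Pm[measurable]: "\<phi> \<in> borel_measurable M" and Pi: "integrable M (\<lambda>x. (\<phi> x)\<^sup>2)"
    using assms by (auto simp: L2fun_def)
  have "(\<integral>\<^sup>+y. ennreal \<bar>\<phi> y\<bar> \<partial>M) \<le> (\<integral>\<^sup>+y. ennreal ((1 + (\<phi> y)\<^sup>2) / 2) \<partial>M)"
  proof (intro nn_integral_mono ennreal_leI)
    fix y
    have "0 \<le> (\<bar>\<phi> y\<bar> - 1)\<^sup>2" by simp
    then show "\<bar>\<phi> y\<bar> \<le> (1 + (\<phi> y)\<^sup>2) / 2" by (simp add: power2_eq_square algebra_simps abs_mult_self_eq)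
  qed
  also have "\<dots> = ennreal (\<integral>y. (1 + (\<phi> y)\<^sup>2) / 2 \<partial>M)"
    by (rule nn_integral_eq_integral)
      (use Pi in \<open>auto intro!: integrable_divide Bochner_Integration.integrable_add finite_measure.integrable_const[OF finM]\<close>)
  also have "\<dots> < \<infinity>" by simp
  finally show ?thesis .
qed

lemma G_sec_meas:
  assumes "x \<in> \<Omega>" "\<phi> \<in> borel_measurable M"
  shows "(\<lambda>y. G x y * \<phi> y) \<in> borel_measurable M"
proof -
  have "(\<lambda>y. G x y) \<in> borel_measurable M"
    using measurable_Pair2[OF Gmeas, of x] assms by simp
  then show ?thesis using assms by measurable
qed

lemma INT_AE:
  assumes L2: "L2fun \<Omega> \<phi>"
  shows "AE x in M. integrable M (\<lambda>y. G x y * \<phi> y)"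
proof -
  have Pm[measurable]: "\<phi> \<in> borel_measurable M" using L2 by (simp add: L2fun_def)
  have Gm[measurable]: "(\<lambda>z. G (fst z) (snd z)) \<in> borel_measurable (M \<Otimes>\<^sub>M M)" by (rule Gmeas)
  obtain C where C: "C \<ge> 0" "\<And>x. x \<in> \<Omega> \<Longrightarrow> (\<integral>\<^sup>+z. kp (real DIM('a) - s) x z \<partial>M) \<le> ennreal C"
    using ball_int_M[of "real DIM('a) - s"] nn_ge2 s_le s_pos by auto
  define c' where "c' = c1 * R powr (2 * s - s)"
  define F where "F x = (\<integral>\<^sup>+y. ennreal (norm (G x y * \<phi> y)) \<partial>M)" for x
  have Fm: "F \<in> borel_measurable M" unfolding F_def
  proof (rule sigma_finite_measure.borel_measurable_nn_integral)
    show "sigma_finite_measure M" using finM unfolding finite_measure_def by blast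
    show "case_prod (\<lambda>x y. ennreal (norm (G x y * \<phi> y))) \<in> borel_measurable (M \<Otimes>\<^sub>M M)"
    proof -
      have "(\<lambda>z. ennreal (norm (G (fst z) (snd z) * \<phi> (snd z)))) \<in> borel_measurable (M \<Otimes>\<^sub>M M)"
        by measurable
      then show ?thesis by (simp add: case_prod_beta')
    qed
  qed
  have "(\<integral>\<^sup>+x. F x \<partial>M) \<le> (\<integral>\<^sup>+x. (\<integral>\<^sup>+y. ennreal c' * (kp (real DIM('a) - s) x y * ennreal \<bar>\<phi> y\<bar>) \<partial>M) \<partial>M)"
    using G_bound AE_space unfolding F_def
  proof (intro nn_integral_mono_AE, elim AE_mp, intro AE_I2 impI)
    fix x assume H: "AE z in M. 0 \<le> G x z \<and> G x z \<le> Kb x z" and x: "x \<in> space M"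
    show "(\<integral>\<^sup>+y. ennreal (norm (G x y * \<phi> y)) \<partial>M) \<le> (\<integral>\<^sup>+y. ennreal c' * (kp (real DIM('a) - s) x y * ennreal \<bar>\<phi> y\<bar>) \<partial>M)"
      using H AE_space
    proof (intro nn_integral_mono_AE, elim AE_mp, intro AE_I2 impI)
      fix y assume G: "0 \<le> G x y \<and> G x y \<le> Kb x y" and y: "y \<in> space M"
      have "ennreal (norm (G x y * \<phi> y)) \<le> ennreal (Kb x y * \<bar>\<phi> y\<bar>)"
        using G by (intro ennreal_leI) (simp add: abs_mult mult_right_mono)
      also have "\<dots> = ennreal (Kb x y) * ennreal \<bar>\<phi> y\<bar>" using Kb_nonneg by (simp add: ennreal_mult)
      also have "\<dots> \<le> (ennreal c' * kp (real DIM('a) - s) x y) * ennreal \<bar>\<phi> y\<bar>"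
        unfolding c'_def using x y s_pos by (intro mult_right_mono Kb_le_kp) auto
      finally show "ennreal (norm (G x y * \<phi> y)) \<le> ennreal c' * (kp (real DIM('a) - s) x y * ennreal \<bar>\<phi> y\<bar>)"
        by (simp add: mult.assoc)
    qed
  qed
  also have "\<dots> = (\<integral>\<^sup>+x. ennreal c' * (\<integral>\<^sup>+y. kp (real DIM('a) - s) x y * ennreal \<bar>\<phi> y\<bar> \<partial>M) \<partial>M)"
    by (intro nn_integral_cong nn_integral_cmult) measurable
  also have "\<dots> = ennreal c' * (\<integral>\<^sup>+x. (\<integral>\<^sup>+y. kp (real DIM('a) - s) x y * ennreal \<bar>\<phi> y\<bar> \<partial>M) \<partial>M)"
    by (rule nn_integral_cmult) measurable
  finally have Fle: "(\<integral>\<^sup>+x. F x \<partial>M) \<le> ennreal c' * (\<integral>\<^sup>+x. (\<integral>\<^sup>+y. kp (real DIM('a) - s) x y * ennreal \<bar>\<phi> y\<bar> \<partial>M) \<partial>M)" .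
  have "(\<integral>\<^sup>+x. (\<integral>\<^sup>+y. kp (real DIM('a) - s) x y * ennreal \<bar>\<phi> y\<bar> \<partial>M) \<partial>M)
      = (\<integral>\<^sup>+y. (\<integral>\<^sup>+x. kp (real DIM('a) - s) x y * ennreal \<bar>\<phi> y\<bar> \<partial>M) \<partial>M)"
    by (rule MM.Fubini'[symmetric]) measurable
  also have "\<dots> = (\<integral>\<^sup>+y. (\<integral>\<^sup>+x. kp (real DIM('a) - s) y x \<partial>M) * ennreal \<bar>\<phi> y\<bar> \<partial>M)"
  proof (intro nn_integral_cong)
    fix y
    have "(\<integral>\<^sup>+x. kp (real DIM('a) - s) x y * ennreal \<bar>\<phi> y\<bar> \<partial>M) = (\<integral>\<^sup>+x. kp (real DIM('a) - s) y x * ennreal \<bar>\<phi> y\<bar> \<partial>M)"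
      by (intro nn_integral_cong) (simp add: kp_sym[of _ y])
    also have "\<dots> = (\<integral>\<^sup>+x. kp (real DIM('a) - s) y x \<partial>M) * ennreal \<bar>\<phi> y\<bar>"
      by (rule nn_integral_multc) measurable
    finally show "(\<integral>\<^sup>+x. kp (real DIM('a) - s) x y * ennreal \<bar>\<phi> y\<bar> \<partial>M) = (\<integral>\<^sup>+x. kp (real DIM('a) - s) y x \<partial>M) * ennreal \<bar>\<phi> y\<bar>" .
  qed
  also have "\<dots> \<le> (\<integral>\<^sup>+y. ennreal C * ennreal \<bar>\<phi> y\<bar> \<partial>M)"
    by (intro nn_integral_mono mult_right_mono C(2)) auto
  also have "\<dots> = ennreal C * (\<integral>\<^sup>+y. ennreal \<bar>\<phi> y\<bar> \<partial>M)" by (rule nn_integral_cmult) measurable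
  also have "\<dots> < \<infinity>" using L1_fin[OF L2] by (simp add: ennreal_mult_less_top)
  finally have fin2: "(\<integral>\<^sup>+x. (\<integral>\<^sup>+y. kp (real DIM('a) - s) x y * ennreal \<bar>\<phi> y\<bar> \<partial>M) \<partial>M) < \<infinity>" .
  have "(\<integral>\<^sup>+x. F x \<partial>M) \<noteq> \<infinity>"
  proof -
    have "ennreal c' * (\<integral>\<^sup>+x. (\<integral>\<^sup>+y. kp (real DIM('a) - s) x y * ennreal \<bar>\<phi> y\<bar> \<partial>M) \<partial>M) < \<infinity>"
      using fin2 by (simp add: ennreal_mult_less_top)
    from le_less_trans[OF Fle this] show ?thesis by simp
  qed
  from nn_integral_PInf_AE[OF Fm this] AE_space
  show ?thesis
  proof (elim AE_mp, intro AE_I2 impI)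
    fix x assume "F x \<noteq> \<infinity>" "x \<in> space M"
    then show "integrable M (\<lambda>y. G x y * \<phi> y)"
      unfolding F_def by (intro integrableI_bounded G_sec_meas) (auto simp: top.not_eq_extremum)
  qed
qed

end

lemma lin_indep_card:
  fixes w :: "nat \<Rightarrow> nat \<Rightarrow> real"
  assumes "finite B" "finite A"
    and "\<And>c. (\<forall>k\<in>B. (\<Sum>j\<in>A. c j * w j k) = 0) \<Longrightarrow> (\<forall>j\<in>A. c j = 0)"
  shows "card A \<le> card B"
  using assms
proof (induction B arbitrary: A w rule: finite_induct)
  case empty
  have "\<forall>j\<in>A. (\<lambda>_. 1::real) j = 0" by (rule empty.prems(2)) simp
  then have "A = {}" by auto
  then show ?case by simp
next
  case (insert b B)
  show ?case
  proof (cases "\<forall>j\<in>A. w j b = 0")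
    case True
    have "card A \<le> card B"
    proof (rule insert.IH[OF insert.prems(1)])
      fix c assume H: "\<forall>k\<in>B. (\<Sum>j\<in>A. c j * w j k) = 0"
      have "(\<Sum>j\<in>A. c j * w j b) = 0" using True by simp
      with H have "\<forall>k\<in>insert b B. (\<Sum>j\<in>A. c j * w j k) = 0" by auto
      then show "\<forall>j\<in>A. c j = 0" by (rule insert.prems(2))
    qed
    then show ?thesis using insert.hyps by simp
  next
    case False
    then obtain j0 where j0: "j0 \<in> A" "w j0 b \<noteq> 0" by auto
    define A' where "A' = A - {j0}"
    define w' where "w' j k = w j0 b * w j k - w j b * w j0 k" for j k
    have fA': "finite A'" using insert.prems(1) by (simp add: A'_def)
    have "card A' \<le> card B"
    proof (rule insert.IH[OF fA', of w'])
      fix c' assume H: "\<forall>k\<in>B. (\<Sum>j\<in>A'. c' j * w' j k) = 0"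
      define c where "c j = (if j = j0 then - (\<Sum>i\<in>A'. c' i * w i b) else w j0 b * c' j)" for j
      have split: "(\<Sum>j\<in>A. c j * w j k) = c j0 * w j0 k + w j0 b * (\<Sum>j\<in>A'. c' j * w j k)" for k
      proof -
        have "(\<Sum>j\<in>A. c j * w j k) = c j0 * w j0 k + (\<Sum>j\<in>A'. c j * w j k)"
          unfolding A'_def using j0(1) insert.prems(1) by (simp add: sum.remove)
        also have "(\<Sum>j\<in>A'. c j * w j k) = w j0 b * (\<Sum>j\<in>A'. c' j * w j k)"
          unfolding sum_distrib_left by (intro sum.cong) (auto simp: c_def A'_def)
        finally show ?thesis .
      qed
      have "\<forall>k\<in>insert b B. (\<Sum>j\<in>A. c j * w j k) = 0"
      proof
        fix k assume k: "k \<in> insert b B"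
        show "(\<Sum>j\<in>A. c j * w j k) = 0"
        proof (cases "k = b")
          case True
          then show ?thesis unfolding split using j0 by (simp add: c_def algebra_simps)
        next
          case False
          then have kB: "k \<in> B" using k by simp
          have "(\<Sum>j\<in>A'. c' j * w' j k) = w j0 b * (\<Sum>j\<in>A'. c' j * w j k) - (\<Sum>i\<in>A'. c' i * w i b) * w j0 k"
            unfolding w'_def sum_distrib_left sum_distrib_right sum_subtractf[symmetric]
            by (intro sum.cong) (auto simp: algebra_simps)
          then have "w j0 b * (\<Sum>j\<in>A'. c' j * w j k) + c j0 * w j0 k = 0"
            using H kB by (simp add: c_def)
          then show ?thesis unfolding split by simp
        qed
      qed
      then have "\<forall>j\<in>A. c j = 0" by (rule insert.prems(2))
      then show "\<forall>j\<in>A'. c' j = 0"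
      proof (intro ballI)
        fix j assume "\<forall>j\<in>A. c j = 0" "j \<in> A'"
        then have "w j0 b * c' j = 0" "j \<noteq> j0" by (auto simp: A'_def c_def split: if_splits)
        then show "c' j = 0" using j0(2) by simp
      qed
    qed
    moreover have "card A = Suc (card A')" using j0 insert.prems(1) unfolding A'_def by (intro card_Suc_Diff1[symmetric]) auto
    ultimately show ?thesis using insert.hyps by simp
  qed
qed


locale eigset2 = eigset +
  assumes SA: "\<forall>f g. L2fun \<Omega> f \<longrightarrow> L2fun \<Omega> g \<longrightarrow> L2fun \<Omega> (Ginv \<Omega> G f) \<and>
        (\<integral>x. Ginv \<Omega> G f x * g x \<partial>lebesgue_on \<Omega>) = (\<integral>x. f x * Ginv \<Omega> G g x \<partial>lebesgue_on \<Omega>)"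
begin

lemma ORTH:
  assumes f: "L2fun \<Omega> f" and g: "L2fun \<Omega> g"
    and ef: "aeq \<Omega> (Ginv \<Omega> G f) (\<lambda>x. a * f x)" and eg: "aeq \<Omega> (Ginv \<Omega> G g) (\<lambda>x. b * g x)"
    and ab: "a \<noteq> b"
  shows "(\<integral>x. f x * g x \<partial>M) = 0"
proof -
  have [measurable]: "f \<in> borel_measurable M" "g \<in> borel_measurable M"
    "Ginv \<Omega> G f \<in> borel_measurable M" "Ginv \<Omega> G g \<in> borel_measurable M"
    using f g SA by (auto simp: L2fun_def)
  have "(\<integral>x. Ginv \<Omega> G f x * g x \<partial>M) = (\<integral>x. a * (f x * g x) \<partial>M)"
    using ef unfolding aeq_def by (intro integral_cong_AE) (auto elim!: AE_mp)
  also have "\<dots> = a * (\<integral>x. f x * g x \<partial>M)" by simp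
  finally have 1: "(\<integral>x. Ginv \<Omega> G f x * g x \<partial>M) = a * (\<integral>x. f x * g x \<partial>M)" .
  have "(\<integral>x. f x * Ginv \<Omega> G g x \<partial>M) = (\<integral>x. b * (f x * g x) \<partial>M)"
    using eg unfolding aeq_def by (intro integral_cong_AE) (auto elim!: AE_mp)
  also have "\<dots> = b * (\<integral>x. f x * g x \<partial>M)" by simp
  finally have 2: "(\<integral>x. f x * Ginv \<Omega> G g x \<partial>M) = b * (\<integral>x. f x * g x \<partial>M)" .
  have "a * (\<integral>x. f x * g x \<partial>M) = b * (\<integral>x. f x * g x \<partial>M)" using 1 2 SA f g by metis
  then show ?thesis using ab by simp
qed

lemma GINV_LC:
  assumes A: "finite A" and L2: "\<And>j. j \<in> A \<Longrightarrow> L2fun \<Omega> (\<Phi> j)"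
    and E: "\<And>j. j \<in> A \<Longrightarrow> aeq \<Omega> (Ginv \<Omega> G (\<Phi> j)) (\<lambda>x. m * \<Phi> j x)"
  shows "aeq \<Omega> (Ginv \<Omega> G (\<lambda>x. \<Sum>j\<in>A. c j * \<Phi> j x)) (\<lambda>x. m * (\<Sum>j\<in>A. c j * \<Phi> j x))"
proof -
  have I: "AE x in M. \<forall>j\<in>A. integrable M (\<lambda>y. G x y * \<Phi> j y)"
    using A by (intro AE_finite_allI INT_AE L2)
  have E': "AE x in M. \<forall>j\<in>A. Ginv \<Omega> G (\<Phi> j) x = m * \<Phi> j x"
    using A E by (intro AE_finite_allI) (auto simp: aeq_def)
  show ?thesis unfolding aeq_def using I E'
  proof (elim AE_mp, intro AE_I2 impI)
    fix x assume I: "\<forall>j\<in>A. integrable M (\<lambda>y. G x y * \<Phi> j y)"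
      and E': "\<forall>j\<in>A. Ginv \<Omega> G (\<Phi> j) x = m * \<Phi> j x"
    have "Ginv \<Omega> G (\<lambda>x. \<Sum>j\<in>A. c j * \<Phi> j x) x = (\<integral>y. (\<Sum>j\<in>A. c j * (G x y * \<Phi> j y)) \<partial>M)"
      unfolding Ginv_def by (intro Bochner_Integration.integral_cong) (auto simp: sum_distrib_left ac_simps)
    also have "\<dots> = (\<Sum>j\<in>A. (\<integral>y. c j * (G x y * \<Phi> j y) \<partial>M))"
      by (rule Bochner_Integration.integral_sum) (use I in auto)
    also have "\<dots> = (\<Sum>j\<in>A. c j * Ginv \<Omega> G (\<Phi> j) x)"
      unfolding Ginv_def by simp
    also have "\<dots> = m * (\<Sum>j\<in>A. c j * \<Phi> j x)"
      using E' by (simp add: sum_distrib_left ac_simps)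
    finally show "Ginv \<Omega> G (\<lambda>x. \<Sum>j\<in>A. c j * \<Phi> j x) x = m * (\<Sum>j\<in>A. c j * \<Phi> j x)" .
  qed
qed

lemma INT_LC:
  assumes A: "finite A" and L2: "\<And>j. j \<in> A \<Longrightarrow> L2fun \<Omega> (\<Phi> j)" and g: "L2fun \<Omega> g"
  shows "(\<integral>x. (\<Sum>j\<in>A. c j * \<Phi> j x) * g x \<partial>M) = (\<Sum>j\<in>A. c j * (\<integral>x. \<Phi> j x * g x \<partial>M))"
proof -
  have "(\<integral>x. (\<Sum>j\<in>A. c j * \<Phi> j x) * g x \<partial>M) = (\<integral>x. (\<Sum>j\<in>A. c j * (\<Phi> j x * g x)) \<partial>M)"
    by (intro Bochner_Integration.integral_cong refl) (simp add: sum_distrib_right mult.assoc)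
  also have "\<dots> = (\<Sum>j\<in>A. (\<integral>x. c j * (\<Phi> j x * g x) \<partial>M))"
    by (rule Bochner_Integration.integral_sum) (use L2_prod_int[OF L2 g] in auto)
  also have "\<dots> = (\<Sum>j\<in>A. c j * (\<integral>x. \<Phi> j x * g x \<partial>M))" by simp
  finally show ?thesis .
qed

end

context eigset2 begin

lemma CANON_le:
  assumes E1: "ordered_eigensystem \<Omega> G \<Phi> \<mu>" and E2: "ordered_eigensystem \<Omega> G \<Psi> \<nu>" and n: "n \<ge> 1"
  shows "\<mu> n \<le> \<nu> n"
proof (rule ccontr)
  assume "\<not> \<mu> n \<le> \<nu> n"
  then have lt: "\<nu> n < \<mu> n" by simp
  have P1: "\<And>k. k \<ge> 1 \<Longrightarrow> L2fun \<Omega> (\<Phi> k) \<and> \<mu> k \<noteq> 0 \<and> aeq \<Omega> (Ginv \<Omega> G (\<Phi> k)) (\<lambda>x. \<mu> k * \<Phi> k x)"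
    and O1: "\<And>j k. j \<ge> 1 \<Longrightarrow> k \<ge> 1 \<Longrightarrow> (\<integral>x. \<Phi> j x * \<Phi> k x \<partial>M) = (if j = k then 1 else 0)"
    and D1: "\<And>j k. j \<ge> 1 \<Longrightarrow> k \<ge> j \<Longrightarrow> \<mu> k \<le> \<mu> j"
    using E1 unfolding ordered_eigensystem_def by auto
  have P2: "\<And>k. k \<ge> 1 \<Longrightarrow> L2fun \<Omega> (\<Psi> k) \<and> \<nu> k \<noteq> 0 \<and> aeq \<Omega> (Ginv \<Omega> G (\<Psi> k)) (\<lambda>x. \<nu> k * \<Psi> k x)"
    and D2: "\<And>j k. j \<ge> 1 \<Longrightarrow> k \<ge> j \<Longrightarrow> \<nu> k \<le> \<nu> j"
    and C2: "\<And>f m. L2fun \<Omega> f \<Longrightarrow> m \<noteq> 0 \<Longrightarrow> aeq \<Omega> (Ginv \<Omega> G f) (\<lambda>x. m * f x) \<Longrightarrow>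
        (\<forall>k\<ge>1. (\<integral>x. f x * \<Psi> k x \<partial>M) = 0) \<Longrightarrow> aeq \<Omega> f (\<lambda>x. 0)"
    using E2 unfolding ordered_eigensystem_def by auto
  define V where "V = \<mu> ` {1..n}"
  define A where "A m = {j\<in>{1..n}. \<mu> j = m}" for m
  define B where "B m = {k\<in>{1..<n}. \<nu> k = m}" for m
  have cardAB: "card (A m) \<le> card (B m)" if mV: "m \<in> V" for m
  proof (rule lin_indep_card[where w = "\<lambda>j k. (\<integral>x. \<Phi> j x * \<Psi> k x \<partial>M)"])
    show "finite (B m)" "finite (A m)" by (auto simp: A_def B_def)
    obtain j0 where j0: "j0 \<in> {1..n}" "\<mu> j0 = m" using mV by (auto simp: V_def)
    have m0: "m \<noteq> 0" using P1[of j0] j0 by auto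
    have mge: "\<mu> n \<le> m" using D1[of j0 n] j0 by auto
    fix c assume H: "\<forall>k\<in>B m. (\<Sum>j\<in>A m. c j * (\<integral>x. \<Phi> j x * \<Psi> k x \<partial>M)) = 0"
    define f where "f x = (\<Sum>j\<in>A m. c j * \<Phi> j x)" for x
    have Aj: "j \<in> A m \<Longrightarrow> j \<ge> 1 \<and> \<mu> j = m" for j by (auto simp: A_def)
    have L2A: "\<And>j. j \<in> A m \<Longrightarrow> L2fun \<Omega> (\<Phi> j)" using P1 Aj by blast
    have fL2: "L2fun \<Omega> f" unfolding f_def by (rule L2_sum) (auto simp: A_def intro: L2A)
    have EA: "aeq \<Omega> (Ginv \<Omega> G (\<Phi> j)) (\<lambda>x. m * \<Phi> j x)" if "j \<in> A m" for j
    proof -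
      have "j \<ge> 1" "\<mu> j = m" using Aj[OF that] by auto
      then show ?thesis using P1[of j] by simp
    qed
    have fE: "aeq \<Omega> (Ginv \<Omega> G f) (\<lambda>x. m * f x)" unfolding f_def
      by (rule GINV_LC[OF _ L2A EA]) (simp_all add: A_def)
    have orth: "\<forall>k\<ge>1. (\<integral>x. f x * \<Psi> k x \<partial>M) = 0"
    proof (intro allI impI)
      fix k :: nat assume k: "k \<ge> 1"
      show "(\<integral>x. f x * \<Psi> k x \<partial>M) = 0"
      proof (cases "k \<in> B m")
        case True
        have "(\<integral>x. f x * \<Psi> k x \<partial>M) = (\<Sum>j\<in>A m. c j * (\<integral>x. \<Phi> j x * \<Psi> k x \<partial>M))"
          unfolding f_def by (rule INT_LC) (auto simp: A_def intro: L2A P2[THEN conjunct1] k)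
        then show ?thesis using H True by simp
      next
        case False
        have "\<nu> k \<noteq> m"
        proof (cases "k < n")
          case True then show ?thesis using False k by (auto simp: B_def)
        next
          case False
          then have "\<nu> k \<le> \<nu> n" using D2[of n k] n by auto
          then show ?thesis using lt mge by auto
        qed
        then show ?thesis using ORTH[OF fL2 _ fE, of "\<Psi> k" "\<nu> k"] P2[OF k] by auto
      qed
    qed
    have f0: "aeq \<Omega> f (\<lambda>x. 0)" by (rule C2[OF fL2 m0 fE orth])
    show "\<forall>j\<in>A m. c j = 0"
    proof
      fix i assume i: "i \<in> A m"
      have i1: "i \<ge> 1" using i by (auto simp: A_def)
      have "(\<integral>x. f x * \<Phi> i x \<partial>M) = (\<Sum>j\<in>A m. c j * (\<integral>x. \<Phi> j x * \<Phi> i x \<partial>M))"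
        unfolding f_def by (rule INT_LC) (auto simp: A_def intro: L2A P1[THEN conjunct1] i1)
      also have "\<dots> = (\<Sum>j\<in>A m. c j * (if j = i then 1 else 0))"
      proof (intro sum.cong refl)
        fix j assume "j \<in> A m"
        then have "j \<ge> 1" using Aj by blast
        then show "c j * (\<integral>x. \<Phi> j x * \<Phi> i x \<partial>M) = c j * (if j = i then 1 else 0)"
          using O1[OF _ i1, of j] by simp
      qed
      also have "\<dots> = c i" using i by (simp add: A_def if_distrib cong: if_cong)
      finally have 1: "(\<integral>x. f x * \<Phi> i x \<partial>M) = c i" .
      have fm: "f \<in> borel_measurable M" "\<Phi> i \<in> borel_measurable M"
        using fL2 P1[OF i1] by (auto simp: L2fun_def)
      have "(\<integral>x. f x * \<Phi> i x \<partial>M) = (\<integral>x. 0 \<partial>M)"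
        using f0 fm unfolding aeq_def by (intro integral_cong_AE) (auto elim!: AE_mp)
      then show "c i = 0" using 1 by simp
    qed
  qed
  have "n = card {1..n}" by simp
  also have "\<dots> = (\<Sum>m\<in>V. card (A m))"
    unfolding V_def A_def using sum.image_gen[of "{1..n}" "\<lambda>_. (1::nat)" \<mu>] by simp
  also have "\<dots> \<le> (\<Sum>m\<in>V. card (B m))" by (intro sum_mono cardAB)
  also have "\<dots> = card (\<Union>m\<in>V. B m)"
    by (rule card_UN_disjoint[symmetric]) (auto simp: V_def B_def)
  also have "\<dots> \<le> card {1..<n}" by (intro card_mono) (auto simp: B_def)
  also have "\<dots> = n - 1" by simp
  finally show False using n by simp
qed

lemma CANON:
  assumes "ordered_eigensystem \<Omega> G \<Phi> \<mu>" "ordered_eigensystem \<Omega> G \<Psi> \<nu>" "n \<ge> 1"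
  shows "\<mu> n = \<nu> n"
  using CANON_le[OF assms] CANON_le[OF assms(2,1,3)] by simp

end

theorem proposition5p4:
  fixes \<Omega> :: "(real ^ 'n) set"
    and D :: "(real ^ 'n \<Rightarrow> real) set"
    and L :: "(real ^ 'n \<Rightarrow> real) \<Rightarrow> (real ^ 'n \<Rightarrow> real)"
    and G :: "real ^ 'n \<Rightarrow> real ^ 'n \<Rightarrow> real"
    and s \<gamma> c0 c1 :: real
    and n :: nat
  assumes "CARD('n) \<ge> 2"
    and "bounded_domain \<Omega>" and "C11_boundary \<Omega>"
    and "linear_L1_operator \<Omega> D L" and "densely_defined \<Omega> D"
    and A1: "m_accretive_L1 \<Omega> D L"
    and A2: "sub_Markov \<Omega> D L"
    and "green_left_inverse \<Omega> D L G"
    and "K2 \<Omega> G s \<gamma> c0 c1"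
    and "n \<ge> 1"
  shows "\<exists>\<kappa>>0. \<forall>\<Phi> \<mu>. ordered_eigensystem \<Omega> G \<Phi> \<mu> \<longrightarrow>
           (AE x in lebesgue_on \<Omega>. \<bar>\<Phi> n x\<bar> \<le> \<kappa> * infdist x (frontier \<Omega>) powr \<gamma>)"
proof -
  interpret E: eigset2 \<Omega> G s \<gamma> c0 c1
  proof (unfold_locales)
    show "bounded_domain \<Omega>" by fact
    show "(\<lambda>z. G (fst z) (snd z)) \<in> borel_measurable (lebesgue_on \<Omega> \<Otimes>\<^sub>M lebesgue_on \<Omega>)"
      using \<open>green_left_inverse \<Omega> D L G\<close> by (simp add: green_left_inverse_def)
    show "K2 \<Omega> G s \<gamma> c0 c1" by fact
    show "2 \<le> DIM(real ^ 'n)" using \<open>CARD('n) \<ge> 2\<close> by simp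
    show "\<forall>f g. L2fun \<Omega> f \<longrightarrow> L2fun \<Omega> g \<longrightarrow> L2fun \<Omega> (Ginv \<Omega> G f) \<and>
        (\<integral>x. Ginv \<Omega> G f x * g x \<partial>lebesgue_on \<Omega>) = (\<integral>x. f x * Ginv \<Omega> G g x \<partial>lebesgue_on \<Omega>)"
      using \<open>green_left_inverse \<Omega> D L G\<close> by (simp add: green_left_inverse_def)
  qed
  show ?thesis
  proof (cases "\<exists>\<Phi>0 \<mu>0. ordered_eigensystem \<Omega> G \<Phi>0 \<mu>0")
    case False
    then show ?thesis by (intro exI[of _ 1]) auto
  next
    case True
    then obtain \<Phi>0 \<mu>0 where E0: "ordered_eigensystem \<Omega> G \<Phi>0 \<mu>0" by blast
    have m0: "\<mu>0 n \<noteq> 0" using E0 \<open>n \<ge> 1\<close> unfolding ordered_eigensystem_def by auto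
    obtain \<kappa> where \<kappa>: "\<kappa> > 0" "\<And>\<Phi>. L2fun \<Omega> \<Phi> \<Longrightarrow> aeq \<Omega> (Ginv \<Omega> G \<Phi>) (\<lambda>x. \<mu>0 n * \<Phi> x) \<Longrightarrow>
       (\<integral>x. (\<Phi> x)\<^sup>2 \<partial>lebesgue_on \<Omega>) = 1 \<Longrightarrow> (AE x in lebesgue_on \<Omega>. \<bar>\<Phi> x\<bar> \<le> \<kappa> * infdist x (frontier \<Omega>) powr \<gamma>)"
      using E.MAIN_m[OF m0] by blast
    show ?thesis
    proof (intro exI[of _ \<kappa>] conjI allI impI \<kappa>(1))
      fix \<Phi> \<mu> assume E: "ordered_eigensystem \<Omega> G \<Phi> \<mu>"
      have eq: "\<mu> n = \<mu>0 n" by (rule E.CANON[OF E E0 \<open>n \<ge> 1\<close>])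
      have P: "L2fun \<Omega> (\<Phi> n)" "aeq \<Omega> (Ginv \<Omega> G (\<Phi> n)) (\<lambda>x. \<mu> n * \<Phi> n x)"
        "(\<integral>x. \<Phi> n x * \<Phi> n x \<partial>lebesgue_on \<Omega>) = 1"
        using E \<open>n \<ge> 1\<close> unfolding ordered_eigensystem_def by auto
      show "AE x in lebesgue_on \<Omega>. \<bar>\<Phi> n x\<bar> \<le> \<kappa> * infdist x (frontier \<Omega>) powr \<gamma>"
        using \<kappa>(2)[OF P(1)] P(2,3) eq by (simp add: power2_eq_square)
    qed
  qed
qed

end
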